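(* For every $w\in F$, the edge $e_0(w)$ is a good edge.
   Context: $F$ is Thompson's group with generators $x_0,x_1$ and $X^1$ its Cayley graph with respect to $\{x_0^{\pm1},x_1^{\pm1}\}$. Elements are represented by reduced tree pair diagrams $(T_-(w),T_+(w))$ of finite rooted binary trees with equally many carets (caret: vertex with its two downward edges), carets numbered in infix order from 1. A caret is a right (left) caret if one of its edges lies on the right (left) side of the tree; the root is both; others are interior. Nested traversal word $\gamma(T)$: go through carets of $T$ in infix order, skipping carets in the right subtree of a caret to which rule (3) or (5) has been applied, appending (1) nothing for caret 1; (2) $x_0^{-1}$ for a left caret numbered $>1$; (3) $x_0^{-1}\gamma(T')x_0x_1^{-1}$ for an interior caret with nonempty right subtree $T'$ (as a tree on its own); (4) $x_1^{-1}$ for an interior caret with empty right subtree; (5) $x_0^{-1}\gamma(T')x_0$ for a non-root right caret whose right subtree $T'$ contains an interior caret; (6) nothing for a non-root right caret whose right subtree has no interior caret. The nested traversal normal form $\eta(w)$ is the free reduction of $\gamma(T_+(w))^{-1}\gamma(T_-(w))$, and $\Psi_w$ is the path in $X^1$ from the identity to $w$ labelled $\eta(w)$. For $a\in\{0,1\}$, $e_a(w)$ is the edge with endpoints $w$ and $wx_a^{-1}$; it is good if the loop $\Psi_w\,e_a(w)\,\Psi_{wx_a^{-1}}^{-1}$ is null-homotopic in $X^1$. *)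

theory Defs
  imports Complex_Main
begin

datatype tree = Leaf | Node tree tree

fun nleaves :: "tree \<Rightarrow> nat" where
  "nleaves Leaf = 1"
| "nleaves (Node l r) = nleaves l + nleaves r"

fun ncarets :: "tree \<Rightarrow> nat" where
  "ncarets Leaf = 0"
| "ncarets (Node l r) = ncarets l + ncarets r + 1"

fun leaf_ints :: "tree \<Rightarrow> real \<Rightarrow> real \<Rightarrow> (real \<times> real) list" where
  "leaf_ints Leaf a b = [(a, b)]"
| "leaf_ints (Node l r) a b = leaf_ints l a ((a + b) / 2) @ leaf_ints r ((a + b) / 2) b"

fun pl_map :: "(real \<times> real) list \<Rightarrow> (real \<times> real) list \<Rightarrow> real \<Rightarrow> real" where
  "pl_map ((a, b) # I) ((c, d) # J) t =
     (if a \<le> t \<and> t \<le> b then c + (t - a) * (d - c) / (b - a) else pl_map I J t)"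
| "pl_map _ _ t = t"

text \<open>The element of F represented by the tree pair diagram (T_-, T_+): leaves of T_- (domain)
  are mapped affinely onto the leaves of T_+ (range).\<close>
definition tpd_fun :: "tree \<Rightarrow> tree \<Rightarrow> real \<Rightarrow> real" where
  "tpd_fun Tm Tp = pl_map (leaf_ints Tm 0 1) (leaf_ints Tp 0 1)"

definition thompsonF :: "(real \<Rightarrow> real) set" where
  "thompsonF = {tpd_fun Tm Tp | Tm Tp. ncarets Tm = ncarets Tp}"

text \<open>Group multiplication: \<open>g \<cdot> h = g \<circ> h\<close> (this is the convention under which
  the label of \<open>\<Psi>_w\<close> evaluates to w).\<close>
definition gmul :: "(real \<Rightarrow> real) \<Rightarrow> (real \<Rightarrow> real) \<Rightarrow> real \<Rightarrow> real" where
  "gmul g h = g \<circ> h"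

text \<open>Exposed carets (both children leaves), recorded by the index of their left leaf.\<close>
fun exposed :: "tree \<Rightarrow> nat set" where
  "exposed Leaf = {}"
| "exposed (Node l r) =
     (if l = Leaf \<and> r = Leaf then {0} else exposed l \<union> (\<lambda>i. i + nleaves l) ` exposed r)"

definition reduced_tpd :: "tree \<Rightarrow> tree \<Rightarrow> bool" where
  "reduced_tpd Tm Tp \<longleftrightarrow> ncarets Tm = ncarets Tp \<and> exposed Tm \<inter> exposed Tp = {}"

definition rtpd :: "(real \<Rightarrow> real) \<Rightarrow> tree \<times> tree" where
  "rtpd w = (THE p. reduced_tpd (fst p) (snd p) \<and> tpd_fun (fst p) (snd p) = w)"

definition Tminus :: "(real \<Rightarrow> real) \<Rightarrow> tree" where "Tminus w = fst (rtpd w)"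
definition Tplus :: "(real \<Rightarrow> real) \<Rightarrow> tree" where "Tplus w = snd (rtpd w)"

datatype gen = X0 | X1

text \<open>A letter \<open>(a, True)\<close> is \<open>x_a\<close>, \<open>(a, False)\<close> is \<open>x_a\<^sup>-\<^sup>1\<close>.\<close>
type_synonym letter = "gen \<times> bool"
type_synonym word = "letter list"

fun inv_letter :: "letter \<Rightarrow> letter" where
  "inv_letter (a, s) = (a, \<not> s)"

definition inv_word :: "word \<Rightarrow> word" where
  "inv_word w = rev (map inv_letter w)"

fun freered :: "word \<Rightarrow> word" where
  "freered [] = []"
| "freered (x # w) =
     (case freered w of [] \<Rightarrow> [x] | y # v \<Rightarrow> (if y = inv_letter x then v else x # y # v))"

definition gen_elt :: "letter \<Rightarrow> real \<Rightarrow> real" where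
  "gen_elt l = (case l of
      (X0, True)  \<Rightarrow> tpd_fun (Node Leaf (Node Leaf Leaf)) (Node (Node Leaf Leaf) Leaf)
    | (X0, False) \<Rightarrow> tpd_fun (Node (Node Leaf Leaf) Leaf) (Node Leaf (Node Leaf Leaf))
    | (X1, True)  \<Rightarrow> tpd_fun (Node Leaf (Node Leaf (Node Leaf Leaf))) (Node Leaf (Node (Node Leaf Leaf) Leaf))
    | (X1, False) \<Rightarrow> tpd_fun (Node Leaf (Node (Node Leaf Leaf) Leaf)) (Node Leaf (Node Leaf (Node Leaf Leaf))))"

datatype pos = RootP | LeftP | RightP | InteriorP

fun lpos :: "pos \<Rightarrow> pos" where
  "lpos RootP = LeftP" | "lpos LeftP = LeftP" | "lpos RightP = InteriorP" | "lpos InteriorP = InteriorP"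

fun rpos :: "pos \<Rightarrow> pos" where
  "rpos RootP = RightP" | "rpos RightP = RightP" | "rpos LeftP = InteriorP" | "rpos InteriorP = InteriorP"

text \<open>Whether the subtree hanging below a right caret (along the right side) contains an
  interior caret: i.e. some caret in it is not on the right side of the tree.\<close>
fun contains_interior :: "tree \<Rightarrow> bool" where
  "contains_interior Leaf = False"
| "contains_interior (Node l r) = (l \<noteq> Leaf \<or> contains_interior r)"

text \<open>Left carets: the one with empty left subtree is caret 1 (rule 1),
  the others give \<open>x0\<inverse>\<close> (rule 2).  Interior carets: rule (4), or rule (3) with
  the nested word of the right subtree, skipping it.  Non-root right carets: rule (5) with
  the nested word of the right subtree, skipping it, or rule (6).\<close>
fun gam :: "pos \<Rightarrow> tree \<Rightarrow> word" where
  "gam p Leaf = []"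
| "gam p (Node l r) = gam (lpos p) l @
     (if p = RootP \<or> p = LeftP then (if l = Leaf then [] else [(X0, False)]) @ gam (rpos p) r
      else if p = InteriorP then
        (if r = Leaf then [(X1, False)]
         else [(X0, False)] @ gam InteriorP r @ [(X0, True), (X1, False)])
      else
        (if contains_interior r then [(X0, False)] @ gam RightP r @ [(X0, True)]
         else gam (rpos p) r))"

definition gamma :: "tree \<Rightarrow> word" where
  "gamma T = gam RootP T"

definition eta :: "(real \<Rightarrow> real) \<Rightarrow> word" where
  "eta w = freered (inv_word (gamma (Tplus w)) @ gamma (Tminus w))"

text \<open>Oriented edge \<open>(g, l)\<close>: from g to \<open>g \<cdot> l\<close>.\<close>
type_synonym edge = "(real \<Rightarrow> real) \<times> letter"

definition rev_edge :: "edge \<Rightarrow> edge" where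
  "rev_edge e = (gmul (fst e) (gen_elt (snd e)), inv_letter (snd e))"

fun path_of :: "(real \<Rightarrow> real) \<Rightarrow> word \<Rightarrow> edge list" where
  "path_of g [] = []"
| "path_of g (l # u) = (g, l) # path_of (gmul g (gen_elt l)) u"

definition rev_path :: "edge list \<Rightarrow> edge list" where
  "rev_path p = rev (map rev_edge p)"

definition backtrack_step :: "edge list \<Rightarrow> edge list \<Rightarrow> bool" where
  "backtrack_step p q \<longleftrightarrow> (\<exists>xs e ys. p = xs @ e # rev_edge e # ys \<and> q = xs @ ys)"

definition null_homotopic :: "edge list \<Rightarrow> bool" where
  "null_homotopic p \<longleftrightarrow> equivclp backtrack_step p []"

definition Psi :: "(real \<Rightarrow> real) \<Rightarrow> edge list" where
  "Psi w = path_of id (eta w)"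

text \<open>\<open>e_a(w)\<close>, oriented from w to \<open>w x_a\<inverse>\<close>.\<close>
definition edge_e :: "gen \<Rightarrow> (real \<Rightarrow> real) \<Rightarrow> edge" where
  "edge_e a w = (w, (a, False))"

definition good_edge :: "gen \<Rightarrow> (real \<Rightarrow> real) \<Rightarrow> bool" where
  "good_edge a w \<longleftrightarrow>
     null_homotopic (Psi w @ [edge_e a w] @ rev_path (Psi (gmul w (gen_elt (a, False)))))"

end

theory Submission
  imports Defs
begin

fun chain :: "real \<Rightarrow> real \<Rightarrow> (real \<times> real) list \<Rightarrow> bool" where
  "chain a b [] = (a = b)"
| "chain a b ((x,y)#I) = (x = a \<and> a < y \<and> chain y b I)"

lemma chain_le: "chain a b I \<Longrightarrow> a \<le> b"
  by (induction a b I rule: chain.induct) auto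

lemma chain_append: "chain a m I \<Longrightarrow> chain m b J \<Longrightarrow> chain a b (I @ J)"
  by (induction a m I rule: chain.induct) auto

lemma length_leaf_ints: "length (leaf_ints T a b) = nleaves T"
  by (induction T arbitrary: a b) auto

lemma chain_leaf_ints: "a < b \<Longrightarrow> chain a b (leaf_ints T a b)"
proof (induction T arbitrary: a b)
  case Leaf then show ?case by auto
next
  case (Node l r)
  have "a < (a+b)/2" "(a+b)/2 < b" using Node by auto
  then show ?case using Node by (auto intro!: chain_append[where m="(a+b)/2"])
qed

lemma pl_outside:
  "chain a b I \<Longrightarrow> length J = length I \<Longrightarrow> t < a \<or> b < t \<Longrightarrow> pl_map I J t = t"
proof (induction a b I arbitrary: J rule: chain.induct)
  case (1 a b) then show ?case by (cases J) auto
next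
  case (2 a b x y I)
  then obtain c d J' where J: "J = (c,d)#J'" by (cases J) auto
  from 2 have "a \<le> y" "y \<le> b" using chain_le by auto
  with 2 J show ?case by auto
qed

lemma pl_range:
  "chain a b I \<Longrightarrow> chain c d J \<Longrightarrow> length J = length I \<Longrightarrow> a < t \<Longrightarrow> t \<le> b
   \<Longrightarrow> c < pl_map I J t \<and> pl_map I J t \<le> d"
proof (induction a b I arbitrary: c J t rule: chain.induct)
  case (1 a b) then show ?case by auto
next
  case (2 a b x y I)
  then obtain z w J' where J: "J = (z,w)#J'" by (cases J) auto
  show ?case
  proof (cases "t \<le> y")
    case True
    with 2 J have e: "pl_map ((x,y)#I) J t = c + (t - a) * (w - c) / (y - a)" by auto
    from 2 J have "c < w" "w \<le> d" using chain_le by auto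
    have ay: "a < y" using 2 by auto
    have "0 < (t - a) * (w - c) / (y - a)" using 2 \<open>c < w\<close> ay by auto
    moreover have "(t - a) * (w - c) \<le> (y - a) * (w - c)" using True \<open>c < w\<close>
      by (intro mult_right_mono) auto
    then have "(t - a) * (w - c) / (y - a) \<le> w - c" using ay by (simp add: pos_divide_le_eq mult.commute)
    ultimately show ?thesis using e \<open>w \<le> d\<close> by auto
  next
    case False
    with 2 J have e: "pl_map ((x,y)#I) J t = pl_map I J' t" by auto
    from 2 J False have "w < pl_map I J' t \<and> pl_map I J' t \<le> d" by (intro "2.IH") auto
    moreover from 2 J have "c < w" by auto
    ultimately show ?thesis using e by auto
  qed
qed

lemma pl_compose_in:
  "chain a b I \<Longrightarrow> chain c d J \<Longrightarrow> chain e f K \<Longrightarrow> length J = length I \<Longrightarrow> length K = length I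
   \<Longrightarrow> a \<le> t \<Longrightarrow> t \<le> b \<Longrightarrow> pl_map J K (pl_map I J t) = pl_map I K t"
proof (induction a b I arbitrary: c J e K t rule: chain.induct)
  case (1 a b) then show ?case by auto
next
  case (2 a b x y I)
  then obtain z w J' where J: "J = (z,w)#J'" by (cases J) auto
  from 2 obtain u v K' where K: "K = (u,v)#K'" by (cases K) auto
  from 2 J K have zc: "z = c" "c < w" "x = a" "a < y" "u = e" by auto
  show ?case
  proof (cases "t \<le> y")
    case True
    define s where "s = c + (t - a) * (w - c) / (y - a)"
    have sI: "pl_map ((x,y)#I) J t = s" using 2 J True zc by (auto simp: s_def)
    have "0 \<le> (t - a) * (w - c) / (y - a)" using 2 zc by auto
    moreover have "(t - a) * (w - c) \<le> (y - a) * (w - c)" using True zc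
      by (intro mult_right_mono) auto
    then have "(t - a) * (w - c) / (y - a) \<le> w - c" using zc by (simp add: pos_divide_le_eq mult.commute)
    ultimately have "c \<le> s" "s \<le> w" by (auto simp: s_def)
    then have "pl_map J K s = e + (s - c) * (v - e) / (w - c)" using J K zc by auto
    also have "\<dots> = e + (t - a) * (v - e) / (y - a)"
    proof -
      have "(s - c) / (w - c) = (t - a) / (y - a)" using zc by (simp add: s_def)
      then have "(s - c) * (v - e) / (w - c) = (t - a) * (v - e) / (y - a)"
        by (metis times_divide_eq_left mult.commute)
      then show ?thesis by simp
    qed
    finally show ?thesis using sI K True 2 zc by auto
  next
    case False
    with 2 J zc have e1: "pl_map ((x,y)#I) J t = pl_map I J' t" by auto
    have r: "w < pl_map I J' t \<and> pl_map I J' t \<le> d"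
      using 2 J False by (intro pl_range) auto
    then have "pl_map J K (pl_map I J' t) = pl_map J' K' (pl_map I J' t)" using J K zc by auto
    also have "\<dots> = pl_map I K' t" using 2 J K False by (intro "2.IH") auto
    finally show ?thesis using e1 K 2 False zc by auto
  qed
qed

lemma pl_id: "chain a b I \<Longrightarrow> pl_map I I t = t"
  by (induction a b I rule: chain.induct) auto

lemma pl_split:
  "length I1 = length J1 \<Longrightarrow>
   pl_map (I1 @ (x,y) # I2) (J1 @ (c,d) # J2) t =
   pl_map (I1 @ (x,(x+y)/2) # ((x+y)/2,y) # I2) (J1 @ (c,(c+d)/2) # ((c+d)/2,d) # J2) t"
proof (induction I1 J1 rule: list_induct2)
  case Nil
  show ?case
  proof (cases "x \<le> t \<and> t \<le> y")
    case True
    show ?thesis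
    proof (cases "t \<le> (x+y)/2")
      case True
      then show ?thesis using \<open>x \<le> t \<and> t \<le> y\<close>
        by (cases "y = x") (simp_all add: field_simps)
    next
      case False
      then have "y \<noteq> x" using True by auto
      then show ?thesis using False True by (simp add: field_simps)
    qed
  next
    case False
    then show ?thesis by auto
  qed
next
  case (Cons a I b J)
  then show ?case by (cases a; cases b) auto
qed

lemma pl_determines:
  "chain a b I \<Longrightarrow> length J = length I \<Longrightarrow> length J' = length I \<Longrightarrow>
   (\<forall>t. a < t \<longrightarrow> pl_map I J t = pl_map I J' t) \<Longrightarrow> J = J'"
proof (induction a b I arbitrary: J J' rule: chain.induct)
  case (1 a b) then show ?case by auto
next
  case (2 a b x y I)
  then obtain c d K where J: "J = (c,d)#K" by (cases J) auto
  from 2 obtain c' d' K' where J': "J' = (c',d')#K'" by (cases J') auto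
  have ay: "a < y" "x = a" using 2 by auto
  have t1: "pl_map ((x,y)#I) J (a + (y-a)/4) = pl_map ((x,y)#I) J' (a + (y-a)/4)"
    and t2: "pl_map ((x,y)#I) J (a + 3*(y-a)/4) = pl_map ((x,y)#I) J' (a + 3*(y-a)/4)"
    using "2.prems"(4)[rule_format, of "a + (y-a)/4"] "2.prems"(4)[rule_format, of "a + 3*(y-a)/4"] ay by auto
  have p1: "a \<le> a + (y-a)/4 \<and> a + (y-a)/4 \<le> y" "a \<le> a + 3*(y-a)/4 \<and> a + 3*(y-a)/4 \<le> y"
    using ay by (auto simp: field_simps)
  have q1: "c + (a + (y-a)/4 - a) * (d - c) / (y - a) = c + (d - c)/4" for c d :: real
    using ay by (simp add: field_simps)
  have q2: "c + (a + 3*(y-a)/4 - a) * (d - c) / (y - a) = c + 3*(d - c)/4" for c d :: real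
    using ay by (simp add: field_simps)
  have hJ: "pl_map ((x,y)#I) J t = c + (t-a)*(d-c)/(y-a)" if "a \<le> t" "t \<le> y" for t
    using J ay that by simp
  have hJ': "pl_map ((x,y)#I) J' t = c' + (t-a)*(d'-c')/(y-a)" if "a \<le> t" "t \<le> y" for t
    using J' ay that by simp
  note e1 = hJ[OF p1(1)[THEN conjunct1] p1(1)[THEN conjunct2]]
  note e2 = hJ'[OF p1(1)[THEN conjunct1] p1(1)[THEN conjunct2]]
  note e3 = hJ[OF p1(2)[THEN conjunct1] p1(2)[THEN conjunct2]]
  note e4 = hJ'[OF p1(2)[THEN conjunct1] p1(2)[THEN conjunct2]]
  have f1: "pl_map ((x,y)#I) J (a + (y-a)/4) = c + (d - c)/4" using e1 q1[of c d] by (rule trans)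
  have f2: "pl_map ((x,y)#I) J' (a + (y-a)/4) = c' + (d' - c')/4" using e2 q1[of c' d'] by (rule trans)
  have f3: "pl_map ((x,y)#I) J (a + 3*(y-a)/4) = c + 3*(d - c)/4" using e3 q2[of c d] by (rule trans)
  have f4: "pl_map ((x,y)#I) J' (a + 3*(y-a)/4) = c' + 3*(d' - c')/4" using e4 q2[of c' d'] by (rule trans)
  have "c + (d - c)/4 = c' + (d' - c')/4" using f1 f2 t1 by simp
  then have A: "3*c + d = 3*c' + d'" by (simp add: field_simps)
  have "c + 3*(d - c)/4 = c' + 3*(d' - c')/4" using f3 f4 t2 by simp
  then have B: "c + 3*d = c' + 3*d'" by (simp add: field_simps)
  from A B have cd: "c = c'" "d = d'" by linarith+
  have "\<forall>t. y < t \<longrightarrow> pl_map I K t = pl_map I K' t"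
  proof (intro allI impI)
    fix t assume "y < t"
    then show "pl_map I K t = pl_map I K' t"
      using "2.prems"(4)[rule_format, of t] ay J J' by auto
  qed
  then have "K = K'" using 2 J J' by (intro "2.IH") auto
  then show ?case using J J' cd by auto
qed

lemma nleaves_pos: "0 < nleaves T" by (induction T) auto
lemma nleaves_ncarets: "nleaves T = ncarets T + 1" by (induction T) auto

lemma leaf_ints_fst: "a < b \<Longrightarrow> (x,y) \<in> set (leaf_ints T a b) \<Longrightarrow> a \<le> x \<and> x < y \<and> y \<le> b"
proof (induction T arbitrary: a b)
  case Leaf then show ?case by auto
next
  case (Node l r)
  have m: "a < (a+b)/2" "(a+b)/2 < b" using Node by auto
  from Node.prems(2) have "(x,y) \<in> set (leaf_ints l a ((a+b)/2)) \<or> (x,y) \<in> set (leaf_ints r ((a+b)/2) b)"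
    by simp
  then show ?case
  proof
    assume "(x,y) \<in> set (leaf_ints l a ((a+b)/2))"
    then have "a \<le> x \<and> x < y \<and> y \<le> (a+b)/2" using Node.IH(1)[OF m(1)] by blast
    then show ?thesis using m by linarith
  next
    assume "(x,y) \<in> set (leaf_ints r ((a+b)/2) b)"
    then have "(a+b)/2 \<le> x \<and> x < y \<and> y \<le> b" using Node.IH(2)[OF m(2)] by blast
    then show ?thesis using m by linarith
  qed
qed

lemma leaf_ints_hd: "leaf_ints T a b \<noteq> [] \<and> fst (hd (leaf_ints T a b)) = a"
  by (induction T arbitrary: a b) auto

lemma leaf_ints_inj: "a < b \<Longrightarrow> leaf_ints A a b = leaf_ints B a b \<Longrightarrow> A = B"
proof (induction A arbitrary: B a b)
  case Leaf
  show ?case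
  proof (cases B)
    case (Node x y)
    have "length (leaf_ints B a b) = nleaves x + nleaves y" using Node by (simp add: length_leaf_ints)
    moreover have "length (leaf_ints Leaf a b) = 1" by simp
    moreover have "length (leaf_ints Leaf a b) = length (leaf_ints B a b)" using Leaf.prems by simp
    ultimately show ?thesis using nleaves_pos[of x] nleaves_pos[of y] by simp
  qed simp
next
  case (Node l r)
  show ?case
  proof (cases B)
    case Leaf
    have "length (leaf_ints (Node l r) a b) = length (leaf_ints B a b)" using Node.prems by simp
    then have "nleaves l + nleaves r = 1" using Leaf by (simp add: length_leaf_ints)
    then show ?thesis using nleaves_pos[of l] nleaves_pos[of r] by simp
  next
    case (Node l' r')
    let ?m = "(a+b)/2"
    have am: "a < ?m" "?m < b" using Node.prems by auto
    have eq: "leaf_ints l a ?m @ leaf_ints r ?m b = leaf_ints l' a ?m @ leaf_ints r' ?m b"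
      using Node.prems \<open>B = Node l' r'\<close> by simp
    have key: False if lt: "nleaves l1 < nleaves l2"
      and e: "leaf_ints l1 a ?m @ leaf_ints r1 ?m b = leaf_ints l2 a ?m @ leaf_ints r2 ?m b" for l1 l2 r1 r2
    proof -
      let ?k = "nleaves l1"
      have "(leaf_ints l1 a ?m @ leaf_ints r1 ?m b) ! ?k = hd (leaf_ints r1 ?m b)"
        using leaf_ints_hd[of r1 "?m" b] by (simp add: length_leaf_ints nth_append hd_conv_nth)
      then have f1: "fst ((leaf_ints l1 a ?m @ leaf_ints r1 ?m b) ! ?k) = ?m"
        using leaf_ints_hd[of r1 "?m" b] by simp
      have "(leaf_ints l2 a ?m @ leaf_ints r2 ?m b) ! ?k = leaf_ints l2 a ?m ! ?k"
        using lt by (simp add: length_leaf_ints nth_append)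
      moreover obtain p q where pq: "leaf_ints l2 a ?m ! ?k = (p, q)" by (cases "leaf_ints l2 a ?m ! ?k")
      moreover have "(p, q) \<in> set (leaf_ints l2 a ?m)"
        using lt pq[symmetric] by (simp add: length_leaf_ints)
      then have "p < ?m" using leaf_ints_fst[OF am(1), of p q l2] by linarith
      ultimately have "fst ((leaf_ints l2 a ?m @ leaf_ints r2 ?m b) ! ?k) < ?m" by simp
      moreover have "fst ((leaf_ints l2 a ?m @ leaf_ints r2 ?m b) ! ?k) = ?m"
        using f1 by (simp only: e[symmetric])
      ultimately show False by simp
    qed
    have "\<not> nleaves l < nleaves l'" using key[of l l' r r'] eq by blast
    moreover have "\<not> nleaves l' < nleaves l" using key[of l' l r' r] eq by metis
    ultimately have "length (leaf_ints l a ?m) = length (leaf_ints l' a ?m)" by (simp add: length_leaf_ints)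
    then have "leaf_ints l a ?m = leaf_ints l' a ?m \<and> leaf_ints r ?m b = leaf_ints r' ?m b"
      using eq append_eq_append_conv by blast
    then have h1: "leaf_ints l a ?m = leaf_ints l' a ?m" and h2: "leaf_ints r ?m b = leaf_ints r' ?m b"
      by auto
    have "l = l'" by (rule Node.IH(1)[OF am(1) h1])
    moreover have "r = r'" by (rule Node.IH(2)[OF am(2) h2])
    ultimately show ?thesis using \<open>B = Node l' r'\<close> by simp
  qed
qed

fun expand :: "tree \<Rightarrow> nat \<Rightarrow> tree" where
  "expand Leaf i = (if i = 0 then Node Leaf Leaf else Leaf)"
| "expand (Node l r) i = (if i < nleaves l then Node (expand l i) r else Node l (expand r (i - nleaves l)))"

lemma nleaves_expand: "i < nleaves T \<Longrightarrow> nleaves (expand T i) = Suc (nleaves T)"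
  by (induction T arbitrary: i) auto

lemma leaf_ints_expand:
  "i < nleaves T \<Longrightarrow> leaf_ints T a b ! i = (x, y) \<Longrightarrow> leaf_ints (expand T i) a b =
     take i (leaf_ints T a b) @ (x, (x + y)/2) # ((x + y)/2, y) # drop (Suc i) (leaf_ints T a b)"
proof (induction T arbitrary: i a b)
  case Leaf then show ?case by auto
next
  case (Node l r)
  show ?case
  proof (cases "i < nleaves l")
    case True
    then have "leaf_ints l a ((a+b)/2) ! i = (x, y)" using Node.prems by (simp add: nth_append length_leaf_ints)
    then have "leaf_ints (expand l i) a ((a+b)/2) = take i (leaf_ints l a ((a+b)/2)) @ (x, (x + y)/2) # ((x + y)/2, y) # drop (Suc i) (leaf_ints l a ((a+b)/2))"
      using Node.IH(1) True by blast
    then show ?thesis using True by (simp add: length_leaf_ints)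
  next
    case False
    then have s: "Suc i - nleaves l = Suc (i - nleaves l)" by simp
    have "i - nleaves l < nleaves r" using False Node.prems by simp
    moreover have "leaf_ints r ((a+b)/2) b ! (i - nleaves l) = (x, y)" using Node.prems False by (simp add: nth_append length_leaf_ints)
    ultimately have f1: "leaf_ints (expand r (i - nleaves l)) ((a+b)/2) b = take (i - nleaves l) (leaf_ints r ((a+b)/2) b) @ (x, (x + y)/2) # ((x + y)/2, y) # drop (Suc (i - nleaves l)) (leaf_ints r ((a+b)/2) b)"
      using Node.IH(2) by blast
    have f2: "leaf_ints (expand (Node l r) i) a b = leaf_ints l a ((a+b)/2) @ leaf_ints (expand r (i - nleaves l)) ((a+b)/2) b"
      using False by simp
    have f3: "take i (leaf_ints (Node l r) a b) = leaf_ints l a ((a+b)/2) @ take (i - nleaves l) (leaf_ints r ((a+b)/2) b)"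
      using False by (simp add: length_leaf_ints)
    have f4: "drop (Suc i) (leaf_ints (Node l r) a b) = drop (Suc (i - nleaves l)) (leaf_ints r ((a+b)/2) b)"
      using False s by (simp add: length_leaf_ints)
    show ?thesis by (simp only: f1 f2 f3 f4 append_assoc append_Cons)
  qed
qed

lemma tpd_expand:
  assumes "i < nleaves T" "nleaves S = nleaves T"
  shows "tpd_fun (expand T i) (expand S i) = tpd_fun T S"
proof
  fix t
  let ?L = "leaf_ints T 0 1" and ?M = "leaf_ints S 0 1"
  define x y c d where "x = fst (?L!i)" "y = snd (?L!i)" "c = fst (?M!i)" "d = snd (?M!i)"
  have lL: "length ?L = nleaves T" "length ?M = nleaves T" using assms by (simp_all add: length_leaf_ints)
  have dL: "?L = take i ?L @ (x, y) # drop (Suc i) ?L"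
    using assms lL by (simp add: id_take_nth_drop x_y_c_d_def)
  have dM: "?M = take i ?M @ (c, d) # drop (Suc i) ?M"
    using assms lL by (simp add: id_take_nth_drop x_y_c_d_def)
  have e1: "tpd_fun (expand T i) (expand S i) t = pl_map (take i ?L @ (x, (x+y)/2) # ((x+y)/2, y) # drop (Suc i) ?L)
     (take i ?M @ (c, (c+d)/2) # ((c+d)/2, d) # drop (Suc i) ?M) t"
    unfolding tpd_fun_def x_y_c_d_def
    using leaf_ints_expand[OF assms(1), of 0 1 x y] leaf_ints_expand[of i S 0 1 c d] assms
    by (simp add: x_y_c_d_def)
  have lt: "length (take i ?L) = length (take i ?M)" using lL by simp
  have "tpd_fun T S t = pl_map (take i ?L @ (x, y) # drop (Suc i) ?L) (take i ?M @ (c, d) # drop (Suc i) ?M) t"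
    unfolding tpd_fun_def using dL dM by simp
  also have "\<dots> = tpd_fun (expand T i) (expand S i) t"
    unfolding e1 by (rule pl_split[OF lt])
  finally show "tpd_fun (expand T i) (expand S i) t = tpd_fun T S t" by (rule sym)
qed

lemma tpd_compose:
  assumes "nleaves A = nleaves B" "nleaves B = nleaves C"
  shows "tpd_fun B C \<circ> tpd_fun A B = tpd_fun A C"
proof
  fix t
  have ch: "chain 0 1 (leaf_ints X 0 1)" for X by (rule chain_leaf_ints) simp
  show "(tpd_fun B C \<circ> tpd_fun A B) t = tpd_fun A C t"
  proof (cases "0 \<le> t \<and> t \<le> 1")
    case True
    show ?thesis unfolding tpd_fun_def o_def
      by (rule pl_compose_in[OF ch ch ch]; use assms True in \<open>simp add: length_leaf_ints\<close>)
  next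
    case False
    then have o: "t < 0 \<or> 1 < t" by auto
    have "pl_map (leaf_ints A 0 1) (leaf_ints B 0 1) t = t"
      by (rule pl_outside[OF ch]; use o assms in \<open>simp add: length_leaf_ints\<close>)
    moreover have "pl_map (leaf_ints B 0 1) (leaf_ints C 0 1) t = t"
      by (rule pl_outside[OF ch]; use o assms in \<open>simp add: length_leaf_ints\<close>)
    moreover have "pl_map (leaf_ints A 0 1) (leaf_ints C 0 1) t = t"
      by (rule pl_outside[OF ch]; use o assms in \<open>simp add: length_leaf_ints\<close>)
    ultimately show ?thesis unfolding tpd_fun_def o_def by simp
  qed
qed

lemma tpd_self: "tpd_fun T T = id"
proof
  fix t
  have ch: "chain 0 1 (leaf_ints T 0 1)" by (rule chain_leaf_ints) simp
  show "tpd_fun T T t = id t" unfolding tpd_fun_def using pl_id[OF ch] by simp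
qed

lemma tpd_inj:
  assumes "tpd_fun U A = tpd_fun U B" "nleaves A = nleaves U" "nleaves B = nleaves U"
  shows "A = B"
proof -
  have ch: "chain 0 1 (leaf_ints U 0 1)" by (rule chain_leaf_ints) simp
  have "leaf_ints A 0 1 = leaf_ints B 0 1"
    by (rule pl_determines[OF ch]; use assms in \<open>simp add: length_leaf_ints tpd_fun_def\<close>)
  then show ?thesis using leaf_ints_inj[of 0 1 A B] by simp
qed

fun graft :: "tree \<Rightarrow> nat \<Rightarrow> tree \<Rightarrow> tree" where
  "graft Leaf i X = (if i = 0 then X else Leaf)"
| "graft (Node l r) i X = (if i < nleaves l then Node (graft l i X) r else Node l (graft r (i - nleaves l) X))"

lemma nleaves_graft: "i < nleaves T \<Longrightarrow> nleaves (graft T i X) = nleaves T + nleaves X - 1"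
  by (induction T arbitrary: i) (auto simp: nleaves_pos Suc_le_eq)

lemma graft_Leaf: "graft T i Leaf = T"
  by (induction T arbitrary: i) auto

lemma graft_split: "i < nleaves T \<Longrightarrow>
  graft T i (Node Ya Yb) = graft (graft (expand T i) (Suc i) Yb) i Ya"
proof (induction T arbitrary: i)
  case Leaf then show ?case by simp
next
  case (Node l r)
  show ?case
  proof (cases "i < nleaves l")
    case True
    then have "Suc i < nleaves (expand l i)" by (simp add: nleaves_expand)
    moreover have "i < nleaves (graft (expand l i) (Suc i) Yb)"
      using True by (simp add: nleaves_graft nleaves_expand nleaves_pos)
    ultimately show ?thesis using True Node.IH(1) by simp
  next
    case False
    then have "Suc i - nleaves l = Suc (i - nleaves l)" by simp
    moreover have "i - nleaves l < nleaves r" using False Node.prems by simp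
    ultimately show ?thesis using False Node.IH(2) by simp
  qed
qed

lemma tpd_graft:
  "i < nleaves T \<Longrightarrow> nleaves S = nleaves T \<Longrightarrow> tpd_fun (graft T i X) (graft S i X) = tpd_fun T S"
proof (induction X arbitrary: T S i)
  case Leaf then show ?case by (simp add: graft_Leaf)
next
  case (Node Ya Yb)
  have e: "nleaves (expand S i) = nleaves (expand T i)" "Suc i < nleaves (expand T i)"
    using Node.prems by (simp_all add: nleaves_expand)
  have "tpd_fun (graft T i (Node Ya Yb)) (graft S i (Node Ya Yb))
      = tpd_fun (graft (graft (expand T i) (Suc i) Yb) i Ya) (graft (graft (expand S i) (Suc i) Yb) i Ya)"
    using Node.prems by (simp add: graft_split)
  also have "\<dots> = tpd_fun (graft (expand T i) (Suc i) Yb) (graft (expand S i) (Suc i) Yb)"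
    using Node.prems e by (intro Node.IH(1)) (simp_all add: nleaves_graft nleaves_expand nleaves_pos)
  also have "\<dots> = tpd_fun (expand T i) (expand S i)"
    using e by (intro Node.IH(2)) simp_all
  also have "\<dots> = tpd_fun T S" using Node.prems by (simp add: tpd_expand)
  finally show ?case .
qed

fun act :: "letter \<Rightarrow> tree \<Rightarrow> tree option" where
  "act (X0, False) (Node L (Node R1 R2)) = Some (Node (Node L R1) R2)"
| "act (X0, True) (Node (Node L R1) R2) = Some (Node L (Node R1 R2))"
| "act (X1, False) (Node L (Node R1 (Node R2 R3))) = Some (Node L (Node (Node R1 R2) R3))"
| "act (X1, True) (Node L (Node (Node R1 R2) R3)) = Some (Node L (Node R1 (Node R2 R3)))"
| "act _ _ = None"

fun moves :: "word \<Rightarrow> tree \<Rightarrow> tree option" where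
  "moves [] D = Some D"
| "moves (m # u) D = (case act m D of None \<Rightarrow> None | Some D' \<Rightarrow> moves u D')"

lemma act_nleaves: "act m D = Some D' \<Longrightarrow> nleaves D' = nleaves D"
  by (induction m D rule: act.induct) auto

lemma moves_nleaves: "moves u D = Some D' \<Longrightarrow> nleaves D' = nleaves D"
  by (induction u arbitrary: D) (auto split: option.splits dest: act_nleaves)

lemma moves_append: "moves (u @ v) D = (case moves u D of None \<Rightarrow> None | Some D' \<Rightarrow> moves v D')"
  by (induction u arbitrary: D) (auto split: option.splits)

lemma act_inv: "act m D = Some D' \<Longrightarrow> act (inv_letter m) D' = Some D"
  by (induction m D rule: act.induct) auto

lemma moves_inv: "moves u D = Some D' \<Longrightarrow> moves (inv_word u) D' = Some D"
  by (induction u arbitrary: D) (auto simp: inv_word_def moves_append split: option.splits dest: act_inv)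

lemma act_graft: "act m D = Some D' \<Longrightarrow> i < nleaves D \<Longrightarrow> act m (graft D i X) = Some (graft D' i X)"
  by (induction m D rule: act.induct) (auto simp: diff_diff_left add.assoc)

lemma moves_graft: "moves u D = Some D' \<Longrightarrow> i < nleaves D \<Longrightarrow> moves u (graft D i X) = Some (graft D' i X)"
proof (induction u arbitrary: D)
  case Nil then show ?case by simp
next
  case (Cons m u)
  then obtain D1 where a: "act m D = Some D1" and m: "moves u D1 = Some D'" by (auto split: option.splits)
  have "i < nleaves D1" using a Cons.prems act_nleaves by metis
  then show ?case using Cons.IH[OF m] act_graft[OF a Cons.prems(2)] by simp
qed

definition endp :: "(real \<Rightarrow> real) \<Rightarrow> word \<Rightarrow> real \<Rightarrow> real" where
  "endp g u = foldl (\<lambda>g l. gmul g (gen_elt l)) g u"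

lemma endp_simps[simp]: "endp g [] = g" "endp g (l # u) = endp (gmul g (gen_elt l)) u"
  "endp g (u @ v) = endp (endp g u) v"
  by (simp_all add: endp_def)

lemma tpd_graft':
  "tpd_fun T S = F \<Longrightarrow> i < nleaves T \<Longrightarrow> nleaves S = nleaves T \<Longrightarrow> tpd_fun (graft T i X) (graft S i X) = F"
  using tpd_graft by simp

lemma tpd3:
  assumes "nleaves P = 3" "nleaves Q = 3"
  shows "tpd_fun (graft (graft (graft P 2 c) 1 b) 0 a) (graft (graft (graft Q 2 c) 1 b) 0 a) = tpd_fun P Q"
  apply (rule tpd_graft')+
  using assms by (simp_all add: nleaves_graft nleaves_pos)

lemma tpd4:
  assumes "nleaves P = 4" "nleaves Q = 4"
  shows "tpd_fun (graft (graft (graft (graft P 3 e) 2 c) 1 b) 0 a) (graft (graft (graft (graft Q 3 e) 2 c) 1 b) 0 a) = tpd_fun P Q"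
  apply (rule tpd_graft')+
  using assms by (simp_all add: nleaves_graft nleaves_pos)

lemma g1: "gen_elt (X0,False) = tpd_fun (Node (Node L R1) R2) (Node L (Node R1 R2))"
proof -
  have "tpd_fun (Node (Node L R1) R2) (Node L (Node R1 R2)) = tpd_fun (Node (Node Leaf Leaf) Leaf) (Node Leaf (Node Leaf Leaf))"
    using tpd3[of "Node (Node Leaf Leaf) Leaf" "Node Leaf (Node Leaf Leaf)" R2 R1 L] by simp
  then show ?thesis by (simp add: gen_elt_def)
qed

lemma g2: "gen_elt (X0,True) = tpd_fun (Node L (Node R1 R2)) (Node (Node L R1) R2)"
proof -
  have "tpd_fun (Node L (Node R1 R2)) (Node (Node L R1) R2) = tpd_fun (Node Leaf (Node Leaf Leaf)) (Node (Node Leaf Leaf) Leaf)"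
    using tpd3[of "Node Leaf (Node Leaf Leaf)" "Node (Node Leaf Leaf) Leaf" R2 R1 L] by simp
  then show ?thesis by (simp add: gen_elt_def)
qed

lemma g3: "gen_elt (X1,False) = tpd_fun (Node L (Node (Node R1 R2) R3)) (Node L (Node R1 (Node R2 R3)))"
proof -
  have "tpd_fun (Node L (Node (Node R1 R2) R3)) (Node L (Node R1 (Node R2 R3))) =
        tpd_fun (Node Leaf (Node (Node Leaf Leaf) Leaf)) (Node Leaf (Node Leaf (Node Leaf Leaf)))"
    using tpd4[of "Node Leaf (Node (Node Leaf Leaf) Leaf)" "Node Leaf (Node Leaf (Node Leaf Leaf))" R3 R2 R1 L] by simp
  then show ?thesis by (simp add: gen_elt_def)
qed

lemma g4: "gen_elt (X1,True) = tpd_fun (Node L (Node R1 (Node R2 R3))) (Node L (Node (Node R1 R2) R3))"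
proof -
  have "tpd_fun (Node L (Node R1 (Node R2 R3))) (Node L (Node (Node R1 R2) R3)) =
        tpd_fun (Node Leaf (Node Leaf (Node Leaf Leaf))) (Node Leaf (Node (Node Leaf Leaf) Leaf))"
    using tpd4[of "Node Leaf (Node Leaf (Node Leaf Leaf))" "Node Leaf (Node (Node Leaf Leaf) Leaf)" R3 R2 R1 L] by simp
  then show ?thesis by (simp add: gen_elt_def)
qed

lemma act_shape:
  "act m D = Some D' \<Longrightarrow>
   (\<exists>L R1 R2. m = (X0,False) \<and> D = Node L (Node R1 R2) \<and> D' = Node (Node L R1) R2) \<or>
   (\<exists>L R1 R2. m = (X0,True) \<and> D = Node (Node L R1) R2 \<and> D' = Node L (Node R1 R2)) \<or>
   (\<exists>L R1 R2 R3. m = (X1,False) \<and> D = Node L (Node R1 (Node R2 R3)) \<and> D' = Node L (Node (Node R1 R2) R3)) \<or>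
   (\<exists>L R1 R2 R3. m = (X1,True) \<and> D = Node L (Node (Node R1 R2) R3) \<and> D' = Node L (Node R1 (Node R2 R3)))"
  by (induction m D rule: act.induct) auto

lemma act_gen: "act m D = Some D' \<Longrightarrow> gen_elt m = tpd_fun D' D"
  by (drule act_shape) (auto simp: g1[symmetric] g2[symmetric] g3[symmetric] g4[symmetric])

lemma act_sem:
  assumes "act m D = Some D'" "nleaves S = nleaves D"
  shows "gmul (tpd_fun D S) (gen_elt m) = tpd_fun D' S"
proof -
  have n: "nleaves D' = nleaves D" by (rule act_nleaves[OF assms(1)])
  have "gmul (tpd_fun D S) (gen_elt m) = tpd_fun D S \<circ> tpd_fun D' D"
    unfolding gmul_def act_gen[OF assms(1)] ..
  also have "\<dots> = tpd_fun D' S" by (rule tpd_compose) (use n assms(2) in auto)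
  finally show ?thesis .
qed

lemma moves_sem:
  "moves u D = Some D' \<Longrightarrow> nleaves S = nleaves D \<Longrightarrow> endp (tpd_fun D S) u = tpd_fun D' S"
proof (induction u arbitrary: D)
  case Nil then show ?case by simp
next
  case (Cons m u)
  show ?case
  proof (cases "act m D")
    case None then show ?thesis using Cons.prems by simp
  next
    case (Some D1)
    then have m: "moves u D1 = Some D'" using Cons.prems by simp
    have n: "nleaves S = nleaves D1" using Some Cons.prems act_nleaves by metis
    have "endp (tpd_fun D S) (m # u) = endp (gmul (tpd_fun D S) (gen_elt m)) u" by simp
    also have "\<dots> = endp (tpd_fun D1 S) u" using act_sem[OF Some Cons.prems(2)] by simp
    also have "\<dots> = tpd_fun D' S" using Cons.IH[OF m n] .
    finally show ?thesis .
  qed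
qed

fun vine :: "nat \<Rightarrow> tree" where
  "vine 0 = Leaf"
| "vine (Suc n) = Node Leaf (vine n)"

lemma nleaves_vine[simp]: "nleaves (vine n) = Suc n" by (induction n) auto
lemma ncarets_vine[simp]: "ncarets (vine n) = n" by (induction n) auto

lemma vine_add[simp]: "vine (n + 1) = Node Leaf (vine n)" "vine (n + 2) = Node Leaf (Node Leaf (vine n))"
  "vine (n + 3) = Node Leaf (Node Leaf (Node Leaf (vine n)))"
  by (simp_all add: numeral_3_eq_3 numeral_2_eq_2)

lemma graft_vine: "graft (vine k) k (vine m) = vine (k + m)"
  by (induction k) auto

lemma graft_vine0: "graft (vine (Suc k)) 0 X = Node X (vine k)"
  by simp

lemma ci_vine: "\<not> contains_interior r \<Longrightarrow> r = vine (ncarets r) \<and> gam RightP r = []"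
  by (induction r) auto

lemma moves_app: "moves u D = Some D1 \<Longrightarrow> moves (u @ v) D = moves v D1"
  by (simp add: moves_append)

lemma CI: "moves (gam InteriorP t) (vine (ncarets t + 2)) = Some (Node Leaf (Node t Leaf))"
proof (induction t)
  case Leaf then show ?case by (simp add: numeral_2_eq_2)
next
  case (Node a b)
  have na: "nleaves a = ncarets a + 1" "nleaves b = ncarets b + 1" by (simp_all add: nleaves_ncarets)
  show ?case
  proof (cases "b = Leaf")
    case True
    have v: "vine (ncarets a + 3) = graft (vine (ncarets a + 2)) (ncarets a + 2) (vine 1)"
      by (subst graft_vine) (rule arg_cong[where f=vine], simp)
    have "moves (gam InteriorP a) (vine (ncarets a + 3)) = Some (graft (Node Leaf (Node a Leaf)) (ncarets a + 2) (vine 1))"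
      unfolding v by (rule moves_graft[OF Node.IH(1)]) simp
    also have "graft (Node Leaf (Node a Leaf)) (ncarets a + 2) (vine 1) = Node Leaf (Node a (Node Leaf Leaf))"
      using na by (simp add: numeral_2_eq_2)
    finally have m1: "moves (gam InteriorP a) (vine (ncarets a + 3)) = Some (Node Leaf (Node a (Node Leaf Leaf)))" .
    have "gam InteriorP (Node a b) = gam InteriorP a @ [(X1, False)]" using True by simp
    moreover have "ncarets (Node a b) + 2 = ncarets a + 3" using True by simp
    ultimately show ?thesis using m1 True by (simp add: moves_append)
  next
    case False
    have v: "vine (ncarets a + ncarets b + 3) = graft (vine (ncarets a + 2)) (ncarets a + 2) (vine (ncarets b + 1))"
      by (subst graft_vine) (rule arg_cong[where f=vine], simp)
    have "moves (gam InteriorP a) (vine (ncarets a + ncarets b + 3)) = Some (graft (Node Leaf (Node a Leaf)) (ncarets a + 2) (vine (ncarets b + 1)))"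
      unfolding v by (rule moves_graft[OF Node.IH(1)]) simp
    also have "graft (Node Leaf (Node a Leaf)) (ncarets a + 2) (vine (ncarets b + 1)) = Node Leaf (Node a (Node Leaf (vine (ncarets b))))"
      using na by (simp add: numeral_2_eq_2)
    finally have m1: "moves (gam InteriorP a) (vine (ncarets a + ncarets b + 3)) = Some (Node Leaf (Node a (Node Leaf (vine (ncarets b)))))" .
    have m2: "moves [(X0, False)] (Node Leaf (Node a (Node Leaf (vine (ncarets b))))) = Some (Node (Node Leaf a) (Node Leaf (vine (ncarets b))))"
      by simp
    have v2: "Node (Node Leaf a) (Node Leaf (vine (ncarets b))) = graft (vine (ncarets b + 2)) 0 (Node Leaf a)"
      by (simp add: numeral_2_eq_2)
    have m3: "moves (gam InteriorP b) (Node (Node Leaf a) (Node Leaf (vine (ncarets b)))) = Some (graft (Node Leaf (Node b Leaf)) 0 (Node Leaf a))"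
      unfolding v2 by (rule moves_graft[OF Node.IH(2)]) simp
    have m4: "moves [(X0, True), (X1, False)] (graft (Node Leaf (Node b Leaf)) 0 (Node Leaf a)) = Some (Node Leaf (Node (Node a b) Leaf))"
      by simp
    have "gam InteriorP (Node a b) = gam InteriorP a @ [(X0, False)] @ gam InteriorP b @ [(X0, True), (X1, False)]"
      using False by simp
    moreover have "ncarets (Node a b) + 2 = ncarets a + ncarets b + 3" by simp
    ultimately show ?thesis using m1 m2 m3 m4 by (simp add: moves_append)
  qed
qed

lemma CR: "moves (gam RightP r) (vine (ncarets r + 1)) = Some (Node Leaf r)"
proof (induction r)
  case Leaf then show ?case by simp
next
  case (Node r1 r2)
  have na: "nleaves r1 = ncarets r1 + 1" by (simp add: nleaves_ncarets)
  have v: "vine (ncarets r1 + ncarets r2 + 2) = graft (vine (ncarets r1 + 2)) (ncarets r1 + 2) (vine (ncarets r2))"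
    by (subst graft_vine) (rule arg_cong[where f=vine], simp)
  have "moves (gam InteriorP r1) (vine (ncarets r1 + ncarets r2 + 2)) = Some (graft (Node Leaf (Node r1 Leaf)) (ncarets r1 + 2) (vine (ncarets r2)))"
    unfolding v by (rule moves_graft[OF CI]) simp
  also have "graft (Node Leaf (Node r1 Leaf)) (ncarets r1 + 2) (vine (ncarets r2)) = Node Leaf (Node r1 (vine (ncarets r2)))"
    using na by (simp add: numeral_2_eq_2)
  finally have m1: "moves (gam InteriorP r1) (vine (ncarets r1 + ncarets r2 + 2)) = Some (Node Leaf (Node r1 (vine (ncarets r2))))" .
  have nc: "ncarets (Node r1 r2) + 1 = ncarets r1 + ncarets r2 + 2" by simp
  show ?case
  proof (cases "contains_interior r2")
    case False
    then have "r2 = vine (ncarets r2)" "gam RightP r2 = []" using ci_vine by auto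
    then show ?thesis using m1 False nc by simp
  next
    case True
    have m2: "moves [(X0, False)] (Node Leaf (Node r1 (vine (ncarets r2)))) = Some (Node (Node Leaf r1) (vine (ncarets r2)))"
      by (cases "ncarets r2") simp_all
    have v2: "Node (Node Leaf r1) (vine (ncarets r2)) = graft (vine (ncarets r2 + 1)) 0 (Node Leaf r1)"
      by simp
    have m3: "moves (gam RightP r2) (Node (Node Leaf r1) (vine (ncarets r2))) = Some (graft (Node Leaf r2) 0 (Node Leaf r1))"
      unfolding v2 by (rule moves_graft[OF Node.IH(2)]) simp
    have m4: "moves [(X0, True)] (graft (Node Leaf r2) 0 (Node Leaf r1)) = Some (Node Leaf (Node r1 r2))"
      by simp
    have "gam RightP (Node r1 r2) = gam InteriorP r1 @ [(X0, False)] @ gam RightP r2 @ [(X0, True)]"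
      using True by simp
    then show ?thesis using m1 m2 m3 m4 nc by (simp add: moves_append)
  qed
qed

lemma CL: "l \<noteq> Leaf \<Longrightarrow> moves (gam LeftP l @ [(X0, False)]) (vine (ncarets l + 1)) = Some (Node l Leaf)"
proof (induction l)
  case Leaf then show ?case by simp
next
  case (Node l1 l2)
  have n1: "nleaves l1 = ncarets l1 + 1" by (simp add: nleaves_ncarets)
  have nc: "ncarets (Node l1 l2) + 1 = ncarets l1 + ncarets l2 + 2" by simp
  show ?case
  proof (cases "l1 = Leaf")
    case True
    have m1: "moves (gam InteriorP l2) (vine (ncarets l2 + 2)) = Some (Node Leaf (Node l2 Leaf))" by (rule CI)
    have "gam LeftP (Node l1 l2) @ [(X0, False)] = gam InteriorP l2 @ [(X0, False)]" using True by simp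
    moreover have "ncarets (Node l1 l2) + 1 = ncarets l2 + 2" using True by simp
    ultimately show ?thesis using m1 True by (simp add: moves_append)
  next
    case False
    have v: "vine (ncarets l1 + ncarets l2 + 2) = graft (vine (ncarets l1 + 1)) (ncarets l1 + 1) (vine (ncarets l2 + 1))"
      by (subst graft_vine) (rule arg_cong[where f=vine], simp)
    have "moves (gam LeftP l1 @ [(X0, False)]) (vine (ncarets l1 + ncarets l2 + 2)) = Some (graft (Node l1 Leaf) (ncarets l1 + 1) (vine (ncarets l2 + 1)))"
      unfolding v by (rule moves_graft[OF Node.IH(1)[OF False]]) simp
    also have "graft (Node l1 Leaf) (ncarets l1 + 1) (vine (ncarets l2 + 1)) = graft (vine (ncarets l2 + 2)) 0 l1"
      using n1 by simp
    finally have m1: "moves (gam LeftP l1 @ [(X0, False)]) (vine (ncarets l1 + ncarets l2 + 2)) = Some (graft (vine (ncarets l2 + 2)) 0 l1)" .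
    have m3: "moves (gam InteriorP l2) (graft (vine (ncarets l2 + 2)) 0 l1) = Some (graft (Node Leaf (Node l2 Leaf)) 0 l1)"
      by (rule moves_graft[OF CI]) simp
    have m4: "moves [(X0, False)] (graft (Node Leaf (Node l2 Leaf)) 0 l1) = Some (Node (Node l1 l2) Leaf)"
      by simp
    have "gam LeftP (Node l1 l2) @ [(X0, False)] = (gam LeftP l1 @ [(X0, False)]) @ gam InteriorP l2 @ [(X0, False)]"
      using False by simp
    then show ?thesis unfolding nc by (simp only: moves_app[OF m1] moves_app[OF m3] m4)
  qed
qed

lemma gamma_moves: "moves (gamma T) (vine (ncarets T)) = Some T"
proof (cases T)
  case Leaf then show ?thesis by (simp add: gamma_def)
next
  case (Node l r)
  show ?thesis
  proof (cases "l = Leaf")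
    case True
    then show ?thesis using CR[of r] Node by (simp add: gamma_def)
  next
    case False
    have n1: "nleaves l = ncarets l + 1" by (simp add: nleaves_ncarets)
    have v: "vine (ncarets l + ncarets r + 1) = graft (vine (ncarets l + 1)) (ncarets l + 1) (vine (ncarets r))"
      by (subst graft_vine) (rule arg_cong[where f=vine], simp)
    have "moves (gam LeftP l @ [(X0, False)]) (vine (ncarets l + ncarets r + 1)) = Some (graft (Node l Leaf) (ncarets l + 1) (vine (ncarets r)))"
      unfolding v by (rule moves_graft[OF CL[OF False]]) simp
    also have "graft (Node l Leaf) (ncarets l + 1) (vine (ncarets r)) = graft (vine (ncarets r + 1)) 0 l"
      using n1 by simp
    finally have m1: "moves (gam LeftP l @ [(X0, False)]) (vine (ncarets l + ncarets r + 1)) = Some (graft (vine (ncarets r + 1)) 0 l)" .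
    have m2: "moves (gam RightP r) (graft (vine (ncarets r + 1)) 0 l) = Some (graft (Node Leaf r) 0 l)"
      by (rule moves_graft[OF CR]) simp
    have "gamma T = (gam LeftP l @ [(X0, False)]) @ gam RightP r" using Node False by (simp add: gamma_def)
    moreover have "ncarets T = ncarets l + ncarets r + 1" using Node by simp
    ultimately show ?thesis using m2 Node by (simp only: moves_app[OF m1]) simp
  qed
qed

lemma gen_cancel: "gmul (gmul g (gen_elt l)) (gen_elt (inv_letter l)) = g"
proof -
  have c: "l = (X0,True) \<or> l = (X0,False) \<or> l = (X1,True) \<or> l = (X1,False)"
    by (cases l; case_tac a; auto)
  have c1: "gen_elt (X0,True) \<circ> gen_elt (X0,False) = id"
    using tpd_compose[of "Node (Node Leaf Leaf) Leaf" "Node Leaf (Node Leaf Leaf)" "Node (Node Leaf Leaf) Leaf"]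
    by (simp add: gen_elt_def tpd_self)
  have c2: "gen_elt (X0,False) \<circ> gen_elt (X0,True) = id"
    using tpd_compose[of "Node Leaf (Node Leaf Leaf)" "Node (Node Leaf Leaf) Leaf" "Node Leaf (Node Leaf Leaf)"]
    by (simp add: gen_elt_def tpd_self)
  have c3: "gen_elt (X1,True) \<circ> gen_elt (X1,False) = id"
    using tpd_compose[of "Node Leaf (Node (Node Leaf Leaf) Leaf)" "Node Leaf (Node Leaf (Node Leaf Leaf))" "Node Leaf (Node (Node Leaf Leaf) Leaf)"]
    by (simp add: gen_elt_def tpd_self)
  have c4: "gen_elt (X1,False) \<circ> gen_elt (X1,True) = id"
    using tpd_compose[of "Node Leaf (Node Leaf (Node Leaf Leaf))" "Node Leaf (Node (Node Leaf Leaf) Leaf)" "Node Leaf (Node Leaf (Node Leaf Leaf))"]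
    by (simp add: gen_elt_def tpd_self)
  have "gen_elt l \<circ> gen_elt (inv_letter l) = id" using c c1 c2 c3 c4 by auto
  then show ?thesis unfolding gmul_def by (metis comp_assoc comp_id)
qed

lemma endp_freered: "endp g (freered u) = endp g u"
proof (induction u arbitrary: g)
  case Nil then show ?case by simp
next
  case (Cons x w)
  show ?case
  proof (cases "freered w")
    case Nil
    then show ?thesis using Cons.IH[of "gmul g (gen_elt x)"] by simp
  next
    case (Cons y v)
    show ?thesis
    proof (cases "y = inv_letter x")
      case True
      have "endp g (x # w) = endp (gmul g (gen_elt x)) (freered w)" using Cons.IH by simp
      also have "\<dots> = endp g v" using Cons True gen_cancel by simp
      finally show ?thesis using Cons True by simp
    next
      case False
      then show ?thesis using Cons Cons.IH[of "gmul g (gen_elt x)"] by simp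
    qed
  qed
qed

lemma eta_sem:
  assumes "ncarets T = ncarets S"
  shows "endp id (freered (inv_word (gamma S) @ gamma T)) = tpd_fun T S"
proof -
  have mS: "moves (inv_word (gamma S)) S = Some (vine (ncarets S))"
    by (rule moves_inv[OF gamma_moves])
  have "endp id (inv_word (gamma S)) = endp (tpd_fun S S) (inv_word (gamma S))" by (simp add: tpd_self)
  also have "\<dots> = tpd_fun (vine (ncarets S)) S" by (rule moves_sem[OF mS]) simp
  finally have e1: "endp id (inv_word (gamma S)) = tpd_fun (vine (ncarets S)) S" .
  have mT: "moves (gamma T) (vine (ncarets S)) = Some T" using gamma_moves[of T] assms by simp
  have "endp id (freered (inv_word (gamma S) @ gamma T)) = endp (endp id (inv_word (gamma S))) (gamma T)"
    by (simp add: endp_freered)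
  also have "\<dots> = tpd_fun T S" unfolding e1 by (rule moves_sem[OF mT]) (simp add: nleaves_ncarets)
  finally show ?thesis .
qed

lemma mem_shift[simp]: "(i::nat) \<in> (\<lambda>k. k + n) ` A \<longleftrightarrow> n \<le> i \<and> i - n \<in> A"
  by (auto simp: image_iff) (metis le_add_diff_inverse2)

lemma mem_exposed_Node: "\<not> (l = Leaf \<and> r = Leaf) \<Longrightarrow>
  i \<in> exposed (Node l r) \<longleftrightarrow> i \<in> exposed l \<or> (nleaves l \<le> i \<and> i - nleaves l \<in> exposed r)"
  by (simp only: exposed.simps if_False mem_shift Un_iff)

lemma exposed_bound: "k \<in> exposed T \<Longrightarrow> Suc k < nleaves T"
proof (induction T arbitrary: k)
  case Leaf then show ?case by simp
next
  case (Node l r)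
  show ?case
  proof (cases "l = Leaf \<and> r = Leaf")
    case True then show ?thesis using Node.prems by simp
  next
    case False
    then have "k \<in> exposed l \<or> (nleaves l \<le> k \<and> k - nleaves l \<in> exposed r)" using Node.prems mem_exposed_Node by blast
    then show ?thesis
    proof
      assume "k \<in> exposed l" then show ?thesis using Node.IH(1) by fastforce
    next
      assume a: "nleaves l \<le> k \<and> k - nleaves l \<in> exposed r"
      then have "Suc (k - nleaves l) < nleaves r" using Node.IH(2) by blast
      then show ?thesis using a by simp
    qed
  qed
qed

lemma expand_not_Leaf: "i < nleaves T \<Longrightarrow> expand T i \<noteq> Leaf"
  by (induction T arbitrary: i) auto

lemma exposed_expand_self: "i < nleaves T \<Longrightarrow> i \<in> exposed (expand T i)"
proof (induction T arbitrary: i)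
  case Leaf then show ?case by simp
next
  case (Node l r)
  show ?case
  proof (cases "i < nleaves l")
    case True
    then show ?thesis using Node.IH(1)[OF True] expand_not_Leaf[OF True] by simp
  next
    case False
    then have k: "i - nleaves l < nleaves r" using Node.prems by simp
    then show ?thesis using Node.IH(2)[OF k] expand_not_Leaf[OF k] False by simp
  qed
qed

lemma expand_inj: "expand A i = expand B i \<Longrightarrow> i < nleaves A \<Longrightarrow> i < nleaves B \<Longrightarrow> A = B"
proof (induction A arbitrary: B i)
  case Leaf
  then show ?case
  proof (cases B)
    case (Node c d)
    show ?thesis
    proof (cases "i < nleaves c")
      case True
      then show ?thesis using Leaf Node expand_not_Leaf[OF True] by (auto split: if_splits)
    next
      case False
      then show ?thesis using Leaf Node nleaves_pos[of c] by (auto split: if_splits)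
    qed
  qed simp
next
  case (Node a b)
  show ?case
  proof (cases B)
    case Leaf
    then show ?thesis using Node.prems nleaves_pos[of a] expand_not_Leaf[of i a]
      by (auto split: if_splits)
  next
    case (Node c d)
    have ea: "nleaves (expand a i) = Suc (nleaves a)" if "i < nleaves a" using nleaves_expand that by blast
    have ec: "nleaves (expand c i) = Suc (nleaves c)" if "i < nleaves c" using nleaves_expand that by blast
    consider "i < nleaves a" "i < nleaves c" | "i < nleaves a" "\<not> i < nleaves c"
      | "\<not> i < nleaves a" "i < nleaves c" | "\<not> i < nleaves a" "\<not> i < nleaves c" by blast
    then show ?thesis
    proof cases
      case 1
      then show ?thesis using Node.prems \<open>B = Node c d\<close> Node.IH(1)[where B=c and i=i] by simp
    next
      case 2
      then have "expand a i = c" using Node.prems \<open>B = Node c d\<close> by simp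
      then show ?thesis using ea 2 by auto
    next
      case 3
      then have "expand c i = a" using Node.prems \<open>B = Node c d\<close> by simp
      then show ?thesis using ec 3 by auto
    next
      case 4
      then show ?thesis using Node.prems \<open>B = Node c d\<close> Node.IH(2)[where B=d and i="i - nleaves a"] by auto
    qed
  qed
qed

lemma exposed_preimage: "i \<in> exposed T \<Longrightarrow> \<exists>T0. i < nleaves T0 \<and> T = expand T0 i"
proof (induction T arbitrary: i)
  case Leaf then show ?case by simp
next
  case (Node l r)
  show ?case
  proof (cases "l = Leaf \<and> r = Leaf")
    case True
    then show ?thesis using Node.prems by (intro exI[of _ Leaf]) simp
  next
    case False
    then have "i \<in> exposed l \<or> (nleaves l \<le> i \<and> i - nleaves l \<in> exposed r)" using Node.prems mem_exposed_Node by blast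
    then show ?thesis
    proof
      assume "i \<in> exposed l"
      then obtain T0 where "i < nleaves T0" "l = expand T0 i" using Node.IH(1) by blast
      then show ?thesis by (intro exI[of _ "Node T0 r"]) simp
    next
      assume a: "nleaves l \<le> i \<and> i - nleaves l \<in> exposed r"
      then obtain T0 where "i - nleaves l < nleaves T0" "r = expand T0 (i - nleaves l)" using Node.IH(2) by blast
      then show ?thesis using a by (intro exI[of _ "Node l T0"]) simp
    qed
  qed
qed

lemma expand_comm: "a < b \<Longrightarrow> b < nleaves A \<Longrightarrow> expand (expand A b) a = expand (expand A a) (Suc b)"
proof (induction A arbitrary: a b)
  case Leaf then show ?case by simp
next
  case (Node l r)
  consider "b < nleaves l" | "a < nleaves l" "\<not> b < nleaves l" | "\<not> a < nleaves l" by blast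
  then show ?case
  proof cases
    case 1
    then show ?thesis using Node by (simp add: nleaves_expand)
  next
    case 2
    then show ?thesis using Node by (simp add: nleaves_expand Suc_diff_le)
  next
    case 3
    then have "b - nleaves l < nleaves r" "a - nleaves l < b - nleaves l" using Node.prems by auto
    then show ?thesis using Node.IH(2) 3 Node.prems by (simp add: Suc_diff_le)
  qed
qed

lemma exposed_expand_other:
  "j < nleaves T \<Longrightarrow> i \<noteq> j \<Longrightarrow>
   i \<in> exposed (expand T j) \<longleftrightarrow> (i < j \<and> Suc i \<noteq> j \<and> i \<in> exposed T) \<or> (Suc j < i \<and> i - 1 \<in> exposed T)"
proof (induction T arbitrary: i j)
  case Leaf then show ?case by auto
next
  case (Node l r)
  have bl: "Suc m < nleaves l" if "m \<in> exposed l" for m using exposed_bound that by blast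
  have br: "Suc m < nleaves r" if "m \<in> exposed r" for m using exposed_bound that by blast
  show ?case
  proof (cases "l = Leaf \<and> r = Leaf")
    case True
    then have "j = 0 \<or> j = 1" using Node.prems by auto
    then show ?thesis using True Node.prems by (auto simp: mem_exposed_Node)
  next
    case lr: False
    have N: "x \<in> exposed (Node l r) \<longleftrightarrow> x \<in> exposed l \<or> (nleaves l \<le> x \<and> x - nleaves l \<in> exposed r)" for x
      using mem_exposed_Node[OF lr] .
    show ?thesis
    proof (cases "j < nleaves l")
      case True
      have nl: "nleaves (expand l j) = Suc (nleaves l)" using True nleaves_expand by blast
      have ne: "expand l j \<noteq> Leaf" using expand_not_Leaf[OF True] .
      have IH: "i \<in> exposed (expand l j) \<longleftrightarrow> (i < j \<and> Suc i \<noteq> j \<and> i \<in> exposed l) \<or> (Suc j < i \<and> i - 1 \<in> exposed l)"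
        using Node.IH(1)[OF True Node.prems(2)] .
      have bel: "Suc x < Suc (nleaves l)" if "x \<in> exposed (expand l j)" for x using exposed_bound[OF that] nl by simp
      have L: "i \<in> exposed (expand (Node l r) j) \<longleftrightarrow> i \<in> exposed (expand l j) \<or> (Suc (nleaves l) \<le> i \<and> i - Suc (nleaves l) \<in> exposed r)"
        using mem_exposed_Node[of "expand l j" r i] ne True nl by simp
      show ?thesis
      proof (cases "i < Suc (nleaves l)")
        case c1: True
        have "i \<in> exposed (expand (Node l r) j) \<longleftrightarrow> i \<in> exposed (expand l j)" using L c1 by auto
        also have "\<dots> \<longleftrightarrow> (i < j \<and> Suc i \<noteq> j \<and> i \<in> exposed l) \<or> (Suc j < i \<and> i - 1 \<in> exposed l)" by (rule IH)
        also have "\<dots> \<longleftrightarrow> (i < j \<and> Suc i \<noteq> j \<and> i \<in> exposed (Node l r)) \<or> (Suc j < i \<and> i - 1 \<in> exposed (Node l r))"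
          using N[of i] N[of "i - 1"] c1 True by auto
        finally show ?thesis .
      next
        case c2: False
        have "i \<in> exposed (expand (Node l r) j) \<longleftrightarrow> i - Suc (nleaves l) \<in> exposed r" using L c2 bel[of i] by auto
        moreover have a3: "i - 1 \<notin> exposed l" using bl[of "i - 1"] c2 by auto
        moreover have "i - 1 - nleaves l = i - Suc (nleaves l)" by simp
        ultimately show ?thesis using N[of "i - 1"] c2 True by auto
      qed
    next
      case False
      define k where "k = j - nleaves l"
      have k: "k < nleaves r" using False Node.prems k_def by simp
      have ne: "expand r k \<noteq> Leaf" using expand_not_Leaf[OF k] .
      have e: "expand (Node l r) j = Node l (expand r k)" using False k_def by simp
      have L: "i \<in> exposed (expand (Node l r) j) \<longleftrightarrow> i \<in> exposed l \<or> (nleaves l \<le> i \<and> i - nleaves l \<in> exposed (expand r k))"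
        using mem_exposed_Node[of l "expand r k" i] ne e by simp
      show ?thesis
      proof (cases "i < nleaves l")
        case True
        then show ?thesis using L N[of i] False bl[of i] by auto
      next
        case c2: False
        define m where "m = i - nleaves l"
        have mk: "m \<noteq> k" using Node.prems(2) c2 False m_def k_def by auto
        have IH: "m \<in> exposed (expand r k) \<longleftrightarrow> (m < k \<and> Suc m \<noteq> k \<and> m \<in> exposed r) \<or> (Suc k < m \<and> m - 1 \<in> exposed r)"
          using Node.IH(2)[OF k mk] .
        have i: "i = m + nleaves l" using c2 m_def by simp
        have "i \<in> exposed (expand (Node l r) j) \<longleftrightarrow> m \<in> exposed (expand r k)"
          using L c2 bl[of i] m_def by auto
        also have "\<dots> \<longleftrightarrow> (i < j \<and> Suc i \<noteq> j \<and> i \<in> exposed (Node l r)) \<or> (Suc j < i \<and> i - 1 \<in> exposed (Node l r))"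
          unfolding IH N[of i] N[of "i - 1"] using i k_def False bl[of "i - 1"] bl[of i] by auto
        finally show ?thesis .
      qed
    qed
  qed
qed

definition pexp :: "tree \<times> tree \<Rightarrow> tree \<times> tree \<Rightarrow> bool" where
  "pexp p q \<longleftrightarrow> nleaves (snd p) = nleaves (fst p) \<and>
     (\<exists>i<nleaves (fst p). q = (expand (fst p) i, expand (snd p) i))"

definition redp :: "tree \<times> tree \<Rightarrow> bool" where
  "redp p \<longleftrightarrow> exposed (fst p) \<inter> exposed (snd p) = {}"

definition bal :: "tree \<times> tree \<Rightarrow> bool" where
  "bal p \<longleftrightarrow> nleaves (snd p) = nleaves (fst p)"

lemma pexp_bal: "pexp p q \<Longrightarrow> bal q"
  unfolding pexp_def bal_def by (auto simp: nleaves_expand)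

lemma pexps_bal: "pexp\<^sup>*\<^sup>* p q \<Longrightarrow> bal p \<Longrightarrow> bal q"
  by (induction rule: rtranclp_induct) (auto dest: pexp_bal)

lemma pexps_tpd: "pexp\<^sup>*\<^sup>* p q \<Longrightarrow> tpd_fun (fst q) (snd q) = tpd_fun (fst p) (snd p)"
proof (induction rule: rtranclp_induct)
  case base then show ?case by simp
next
  case (step y z)
  then obtain i where "i < nleaves (fst y)" "nleaves (snd y) = nleaves (fst y)"
    "z = (expand (fst y) i, expand (snd y) i)" unfolding pexp_def by blast
  then show ?case using step.IH tpd_expand by simp
qed

lemma pexp_size: "pexp p q \<Longrightarrow> nleaves (fst q) = Suc (nleaves (fst p))"
  unfolding pexp_def by (auto simp: nleaves_expand)

lemma pexps_size: "pexp\<^sup>*\<^sup>* p q \<Longrightarrow> nleaves (fst p) \<le> nleaves (fst q)"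
  by (induction rule: rtranclp_induct) (auto dest: pexp_size)

lemma key_lemma:
  assumes "redp P" "pexp\<^sup>*\<^sup>* P R"
  shows "i \<in> exposed (fst R) \<Longrightarrow> i \<in> exposed (snd R) \<Longrightarrow>
    \<exists>Q. pexp\<^sup>*\<^sup>* P Q \<and> i < nleaves (fst Q) \<and> nleaves (snd Q) = nleaves (fst Q) \<and>
        R = (expand (fst Q) i, expand (snd Q) i)"
  using assms(2)
proof (induction arbitrary: i rule: rtranclp_induct)
  case base
  then show ?case using assms(1) unfolding redp_def by blast
next
  case (step R0 R)
  obtain A B where R0: "R0 = (A, B)" by (cases R0)
  from step.hyps(2) obtain j where j: "j < nleaves A" "nleaves B = nleaves A"
    "R = (expand A j, expand B j)" unfolding pexp_def R0 by auto
  show ?case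
  proof (cases "i = j")
    case True
    then show ?thesis using step.hyps(1) j R0 by (intro exI[of _ R0]) auto
  next
    case False
    have jB: "j < nleaves B" using j by simp
    have eA: "i \<in> exposed (expand A j)" and eB: "i \<in> exposed (expand B j)" using step.prems j by auto
    have cA: "(i < j \<and> Suc i \<noteq> j \<and> i \<in> exposed A) \<or> (Suc j < i \<and> i - 1 \<in> exposed A)"
      using exposed_expand_other[OF j(1) False] eA by blast
    have cB: "(i < j \<and> Suc i \<noteq> j \<and> i \<in> exposed B) \<or> (Suc j < i \<and> i - 1 \<in> exposed B)"
      using exposed_expand_other[OF jB False] eB by blast
    show ?thesis
    proof (cases "i < j")
      case True
      then have ij: "Suc i < j" "i \<in> exposed A" "i \<in> exposed B" using cA cB by auto
      then obtain Q0 where Q0: "pexp\<^sup>*\<^sup>* P Q0" "i < nleaves (fst Q0)" "nleaves (snd Q0) = nleaves (fst Q0)"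
        "R0 = (expand (fst Q0) i, expand (snd Q0) i)"
        using step.IH[of i] R0 by auto
      obtain C D where CD: "Q0 = (C, D)" by (cases Q0)
      have nA: "nleaves A = Suc (nleaves C)" using Q0 CD R0 nleaves_expand by auto
      have jc: "j - 1 < nleaves C" using j nA ij by simp
      have c1: "expand A j = expand (expand C (j - 1)) i"
        using expand_comm[of i "j - 1" C] ij jc Q0 CD R0 by simp
      have c2: "expand B j = expand (expand D (j - 1)) i"
        using expand_comm[of i "j - 1" D] ij jc Q0 CD R0 by simp
      let ?Q = "(expand C (j - 1), expand D (j - 1))"
      have "pexp Q0 ?Q" unfolding pexp_def using CD Q0 jc by auto
      then have "pexp\<^sup>*\<^sup>* P ?Q" using Q0 by auto
      moreover have "i < nleaves (fst ?Q)" using Q0 CD jc by (simp add: nleaves_expand)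
      moreover have "nleaves (snd ?Q) = nleaves (fst ?Q)" using Q0 CD jc by (simp add: nleaves_expand)
      ultimately show ?thesis using c1 c2 j(3) by (intro exI[of _ ?Q]) simp
    next
      case False
      then have ij: "Suc j < i" "i - 1 \<in> exposed A" "i - 1 \<in> exposed B" using cA cB \<open>i \<noteq> j\<close> by auto
      then obtain Q0 where Q0: "pexp\<^sup>*\<^sup>* P Q0" "i - 1 < nleaves (fst Q0)" "nleaves (snd Q0) = nleaves (fst Q0)"
        "R0 = (expand (fst Q0) (i - 1), expand (snd Q0) (i - 1))"
        using step.IH[of "i - 1"] R0 by auto
      obtain C D where CD: "Q0 = (C, D)" by (cases Q0)
      have jk: "j < i - 1" using ij by simp
      have si: "Suc (i - 1) = i" using ij by simp
      have c1: "expand A j = expand (expand C j) i"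
        using expand_comm[of j "i - 1" C] jk Q0 CD R0 si by simp
      have c2: "expand B j = expand (expand D j) i"
        using expand_comm[of j "i - 1" D] jk Q0 CD R0 si by simp
      let ?Q = "(expand C j, expand D j)"
      have jc: "j < nleaves C" using jk Q0 CD by simp
      have "pexp Q0 ?Q" unfolding pexp_def using CD Q0 jc by auto
      then have "pexp\<^sup>*\<^sup>* P ?Q" using Q0 by auto
      moreover have "i < nleaves (fst ?Q)" using Q0 CD jc si by (simp add: nleaves_expand)
      moreover have "nleaves (snd ?Q) = nleaves (fst ?Q)" using Q0 CD jc by (simp add: nleaves_expand)
      ultimately show ?thesis using c1 c2 j(3) by (intro exI[of _ ?Q]) simp
    qed
  qed
qed

lemma pexps_red_target: "pexp\<^sup>*\<^sup>* P R \<Longrightarrow> redp R \<Longrightarrow> P = R"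
proof (induction rule: rtranclp_induct)
  case base then show ?case by simp
next
  case (step y z)
  then obtain i where "i < nleaves (fst y)" "nleaves (snd y) = nleaves (fst y)"
    "z = (expand (fst y) i, expand (snd y) i)" unfolding pexp_def by blast
  then have "i \<in> exposed (fst z)" "i \<in> exposed (snd z)" using exposed_expand_self by auto
  then show ?case using step.prems unfolding redp_def by blast
qed

lemma unique_red:
  "pexp\<^sup>*\<^sup>* P R \<Longrightarrow> pexp\<^sup>*\<^sup>* P' R \<Longrightarrow> redp P \<Longrightarrow> redp P' \<Longrightarrow> P = P'"
proof (induction "nleaves (fst R)" arbitrary: R rule: less_induct)
  case less
  show ?case
  proof (cases "redp R")
    case True
    then show ?thesis using pexps_red_target less.prems by metis
  next
    case False
    then obtain i where i: "i \<in> exposed (fst R)" "i \<in> exposed (snd R)" unfolding redp_def by blast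
    obtain Q where Q: "pexp\<^sup>*\<^sup>* P Q" "i < nleaves (fst Q)" "nleaves (snd Q) = nleaves (fst Q)"
        "R = (expand (fst Q) i, expand (snd Q) i)"
      using key_lemma[OF less.prems(3) less.prems(1) i] by blast
    obtain Q' where Q': "pexp\<^sup>*\<^sup>* P' Q'" "i < nleaves (fst Q')" "nleaves (snd Q') = nleaves (fst Q')"
        "R = (expand (fst Q') i, expand (snd Q') i)"
      using key_lemma[OF less.prems(4) less.prems(2) i] by blast
    have "fst Q = fst Q'" using Q Q' expand_inj by (metis fst_conv)
    moreover have "snd Q = snd Q'" using Q Q' expand_inj calculation by (metis snd_conv)
    ultimately have QQ: "Q = Q'" by (simp add: prod_eq_iff)
    have "nleaves (fst Q) < nleaves (fst R)" using Q by (simp add: nleaves_expand)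
    then show ?thesis using less.hyps[of Q] Q Q' QQ less.prems by blast
  qed
qed

lemma exists_red: "bal p \<Longrightarrow> \<exists>q. redp q \<and> bal q \<and> pexp\<^sup>*\<^sup>* q p"
proof (induction "nleaves (fst p)" arbitrary: p rule: less_induct)
  case less
  show ?case
  proof (cases "redp p")
    case True then show ?thesis using less.prems by blast
  next
    case False
    then obtain i where i: "i \<in> exposed (fst p)" "i \<in> exposed (snd p)" unfolding redp_def by blast
    obtain A where A: "i < nleaves A" "fst p = expand A i" using exposed_preimage[OF i(1)] by blast
    obtain B where B: "i < nleaves B" "snd p = expand B i" using exposed_preimage[OF i(2)] by blast
    have "nleaves B = nleaves A" using less.prems A B nleaves_expand unfolding bal_def by fastforce
    then have bAB: "bal (A, B)" and pAB: "pexp (A, B) p" unfolding bal_def pexp_def using A B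
      by (auto simp: prod_eq_iff)
    have "nleaves A < nleaves (fst p)" using A nleaves_expand by simp
    then obtain q where "redp q" "bal q" "pexp\<^sup>*\<^sup>* q (A, B)" using less.hyps[of "(A,B)"] bAB by auto
    then show ?thesis using pAB by (meson rtranclp.rtrancl_into_rtrancl)
  qed
qed

definition texp :: "tree \<Rightarrow> tree \<Rightarrow> bool" where
  "texp A B \<longleftrightarrow> (\<exists>i<nleaves A. B = expand A i)"

lemma lift: "texp\<^sup>*\<^sup>* A U \<Longrightarrow> nleaves S = nleaves A \<Longrightarrow> \<exists>S'. pexp\<^sup>*\<^sup>* (A, S) (U, S')"
proof (induction rule: rtranclp_induct)
  case base then show ?case by blast
next
  case (step y z)
  then obtain S' where S': "pexp\<^sup>*\<^sup>* (A, S) (y, S')" by blast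
  then have "nleaves S' = nleaves y" using pexps_bal[OF S'] step.prems unfolding bal_def by simp
  moreover obtain i where "i < nleaves y" "z = expand y i" using step.hyps(2) unfolding texp_def by blast
  ultimately have "pexp (y, S') (z, expand S' i)" unfolding pexp_def by auto
  then show ?case using S' by (meson rtranclp.rtrancl_into_rtrancl)
qed

lemma texp_left: "texp\<^sup>*\<^sup>* a a' \<Longrightarrow> texp\<^sup>*\<^sup>* (Node a b) (Node a' b)"
proof (induction rule: rtranclp_induct)
  case base then show ?case by simp
next
  case (step y z)
  then obtain i where "i < nleaves y" "z = expand y i" unfolding texp_def by blast
  then have "texp (Node y b) (Node z b)" unfolding texp_def by (intro exI[of _ i]) simp
  then show ?case using step.IH by (meson rtranclp.rtrancl_into_rtrancl)
qed

lemma texp_right: "texp\<^sup>*\<^sup>* b b' \<Longrightarrow> texp\<^sup>*\<^sup>* (Node a b) (Node a b')"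
proof (induction rule: rtranclp_induct)
  case base then show ?case by simp
next
  case (step y z)
  then obtain i where "i < nleaves y" "z = expand y i" unfolding texp_def by blast
  then have "texp (Node a y) (Node a z)" unfolding texp_def by (intro exI[of _ "i + nleaves a"]) simp
  then show ?case using step.IH by (meson rtranclp.rtrancl_into_rtrancl)
qed

lemma texp_Leaf: "texp\<^sup>*\<^sup>* Leaf X"
proof (induction X)
  case Leaf then show ?case by simp
next
  case (Node x y)
  have "texp Leaf (Node Leaf Leaf)" unfolding texp_def by (intro exI[of _ 0]) simp
  moreover have "texp\<^sup>*\<^sup>* (Node Leaf Leaf) (Node x Leaf)" using texp_left[OF Node.IH(1)] .
  moreover have "texp\<^sup>*\<^sup>* (Node x Leaf) (Node x y)" using texp_right[OF Node.IH(2)] .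
  ultimately show ?case by (meson converse_rtranclp_into_rtranclp rtranclp_trans)
qed

fun join :: "tree \<Rightarrow> tree \<Rightarrow> tree" where
  "join Leaf B = B"
| "join A Leaf = A"
| "join (Node a b) (Node c d) = Node (join a c) (join b d)"

lemma join_left: "texp\<^sup>*\<^sup>* A (join A B)"
proof (induction A B rule: join.induct)
  case (1 B) then show ?case by (simp add: texp_Leaf)
next
  case (2 v va) then show ?case by simp
next
  case (3 a b c d)
  then show ?case using texp_left[OF "3.IH"(1), of b] texp_right[OF "3.IH"(2), of "join a c"]
    by (simp add: rtranclp_trans)
qed

lemma join_right: "texp\<^sup>*\<^sup>* B (join A B)"
proof (induction A B rule: join.induct)
  case (1 B) then show ?case by simp
next
  case (2 v va) then show ?case by (simp add: texp_Leaf)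
next
  case (3 a b c d)
  then show ?case using texp_left[OF "3.IH"(1), of d] texp_right[OF "3.IH"(2), of "join a c"]
    by (simp add: rtranclp_trans)
qed

lemma reduced_unique:
  assumes "reduced_tpd T S" "reduced_tpd T' S'" "tpd_fun T S = tpd_fun T' S'"
  shows "T = T' \<and> S = S'"
proof -
  let ?U = "join T T'"
  have bT: "nleaves S = nleaves T" "nleaves S' = nleaves T'"
    using assms unfolding reduced_tpd_def by (simp_all add: nleaves_ncarets)
  obtain S1 where S1: "pexp\<^sup>*\<^sup>* (T, S) (?U, S1)" using lift[OF join_left bT(1)] by blast
  obtain S2 where S2: "pexp\<^sup>*\<^sup>* (T', S') (?U, S2)" using lift[OF join_right bT(2)] by blast
  have "tpd_fun ?U S1 = tpd_fun ?U S2" using pexps_tpd[OF S1] pexps_tpd[OF S2] assms(3) by simp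
  moreover have "nleaves S1 = nleaves ?U" using pexps_bal[OF S1] bT unfolding bal_def by simp
  moreover have "nleaves S2 = nleaves ?U" using pexps_bal[OF S2] bT unfolding bal_def by simp
  ultimately have "S1 = S2" using tpd_inj by blast
  then have "(T, S) = (T', S')"
    using unique_red[OF S1] S2 assms unfolding reduced_tpd_def redp_def by simp
  then show ?thesis by simp
qed

lemma rtpd_eq: "reduced_tpd T S \<Longrightarrow> rtpd (tpd_fun T S) = (T, S)"
  unfolding rtpd_def
  by (rule the_equality) (auto dest: reduced_unique)

lemma thompson_rep: "w \<in> thompsonF \<Longrightarrow> \<exists>T S. reduced_tpd T S \<and> w = tpd_fun T S"
proof -
  assume "w \<in> thompsonF"
  then obtain T0 S0 where w: "w = tpd_fun T0 S0" "ncarets T0 = ncarets S0" unfolding thompsonF_def by blast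
  then have "bal (T0, S0)" unfolding bal_def by (simp add: nleaves_ncarets)
  then obtain q where q: "redp q" "bal q" "pexp\<^sup>*\<^sup>* q (T0, S0)" using exists_red by blast
  have "reduced_tpd (fst q) (snd q)" using q unfolding reduced_tpd_def redp_def bal_def
    by (simp add: nleaves_ncarets)
  moreover have "w = tpd_fun (fst q) (snd q)" using pexps_tpd[OF q(3)] w by simp
  ultimately show ?thesis by blast
qed

fun redw :: "word \<Rightarrow> bool" where
  "redw [] = True"
| "redw [x] = True"
| "redw (x # y # z) = (y \<noteq> inv_letter x \<and> redw (y # z))"

lemma inv_inv[simp]: "inv_letter (inv_letter x) = x" by (cases x) simp

lemma redw_tl: "redw (x # z) \<Longrightarrow> redw z"
  by (cases z) auto

lemma redw_freered: "redw (freered u)"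
proof (induction u)
  case Nil then show ?case by simp
next
  case (Cons x w)
  then show ?case by (cases "freered w") (auto dest: redw_tl)
qed

lemma freered_redw: "redw u \<Longrightarrow> freered u = u"
proof (induction u)
  case Nil then show ?case by simp
next
  case (Cons x w)
  then have "freered w = w" using redw_tl by blast
  then show ?case using Cons.prems by (cases w) auto
qed

lemma freered_idem[simp]: "freered (freered u) = freered u"
  by (rule freered_redw[OF redw_freered])

lemma fr_cong: "freered a = freered b \<Longrightarrow> freered (x # a) = freered (x # b)"
  by simp

lemma fr_cancel: "freered (x # inv_letter x # v) = freered v"
proof -
  have r: "redw (freered v)" by (rule redw_freered)
  show ?thesis
  proof (cases "freered v")
    case Nil then show ?thesis by simp
  next
    case (Cons y z)
    show ?thesis
    proof (cases "y = x")
      case True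
      have "redw (y # z)" using r Cons by simp
      then have "redw z" by (rule redw_tl)
      then have "freered z = z" by (rule freered_redw)
      moreover have "freered (inv_letter x # v) = z" using Cons True by simp
      ultimately have "freered (x # inv_letter x # v) = freered (x # z)" by (metis fr_cong freered.simps(2))
      also have "\<dots> = x # z"
      proof -
        have "redw (x # z)" using r Cons True by simp
        then show ?thesis by (rule freered_redw)
      qed
      finally show ?thesis using Cons True by simp
    next
      case False
      then show ?thesis using Cons by simp
    qed
  qed
qed

lemma fr_app_right: "freered (u @ v) = freered (u @ freered v)"
proof (induction u)
  case Nil then show ?case by simp
next
  case (Cons x u)
  then show ?case by (metis append_Cons fr_cong)
qed

lemma fr_app_left: "freered (u @ v) = freered (freered u @ v)"
proof (induction u)
  case Nil then show ?case by simp
next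
  case (Cons x u)
  have "freered ((x # u) @ v) = freered (x # freered (u @ v))" by (metis append_Cons fr_cong freered_idem)
  also have "\<dots> = freered (x # freered (freered u @ v))" using Cons.IH by simp
  also have "\<dots> = freered (x # freered u @ v)" by (metis fr_cong freered_idem)
  finally have e: "freered ((x # u) @ v) = freered (x # freered u @ v)" .
  show ?case
  proof (cases "freered u")
    case Nil then show ?thesis using e by simp
  next
    case (Cons y z)
    show ?thesis
    proof (cases "y = inv_letter x")
      case True
      then have "freered (x # freered u @ v) = freered (z @ v)" using Cons fr_cancel by simp
      moreover have "freered (x # u) = z" using Cons True by simp
      ultimately show ?thesis using e by simp
    next
      case False
      then have "freered (x # u) = x # freered u" using Cons by simp
      then show ?thesis using e by simp
    qed
  qed
qed

lemma fr_cancel_mid: "freered (u @ x # inv_letter x # v) = freered (u @ v)"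
  by (metis fr_app_right fr_cancel)

lemma fr_snoc_red:
  assumes "redw a"
  shows "freered (a @ [y]) = (if a \<noteq> [] \<and> last a = inv_letter y then butlast a else a @ [y])"
proof (cases "a \<noteq> [] \<and> last a = inv_letter y")
  case True
  then obtain a' where a: "a = a' @ [inv_letter y]" by (metis append_butlast_last_id)
  have "redw a'"
  proof -
    have "\<And>b c. redw (b @ c) \<Longrightarrow> redw b"
    proof -
      fix b c show "redw (b @ c) \<Longrightarrow> redw b"
        by (induction b rule: redw.induct) (auto dest: redw_tl)
    qed
    then show ?thesis using assms a by blast
  qed
  then have "freered (a @ [y]) = a'" using a fr_cancel_mid[of a' "inv_letter y" "[]"] freered_redw by simp
  then show ?thesis using True a by simp
next
  case False
  have "redw (a @ [y])" using assms False
    by (induction a rule: redw.induct) auto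
  then have "freered (a @ [y]) = a @ [y]" by (rule freered_redw)
  then show ?thesis using False by auto
qed

lemma path_of_append: "path_of g (u @ v) = path_of g u @ path_of (endp g u) v"
  by (induction u arbitrary: g) auto

lemma rev_path_append: "rev_path (p @ q) = rev_path q @ rev_path p"
  by (simp add: rev_path_def)

lemma null_self: "null_homotopic (p @ rev_path p)"
proof (induction p rule: rev_induct)
  case Nil then show ?case by (simp add: null_homotopic_def rev_path_def)
next
  case (snoc e p)
  have "backtrack_step ((p @ [e]) @ rev_path (p @ [e])) (p @ rev_path p)"
    unfolding backtrack_step_def
    by (rule exI[of _ p], rule exI[of _ e], rule exI[of _ "rev_path p"]) (simp add: rev_path_def)
  then have "equivclp backtrack_step ((p @ [e]) @ rev_path (p @ [e])) (p @ rev_path p)" by blast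
  then show ?case using snoc unfolding null_homotopic_def by (meson equivclp_trans)
qed

lemma null_bt: "null_homotopic (p @ [e, rev_edge e] @ rev_path p)"
proof -
  have "backtrack_step (p @ [e, rev_edge e] @ rev_path p) (p @ rev_path p)"
    unfolding backtrack_step_def
    by (rule exI[of _ p], rule exI[of _ e], rule exI[of _ "rev_path p"]) simp
  then have "equivclp backtrack_step (p @ [e, rev_edge e] @ rev_path p) (p @ rev_path p)" by blast
  then show ?thesis using null_self unfolding null_homotopic_def by (meson equivclp_trans)
qed

lemma good_from_words:
  assumes "endp id (eta w) = w" "redw (eta w)"
    "eta (gmul w (gen_elt (X0, False))) = freered (eta w @ [(X0, False)])"
  shows "good_edge X0 w"
proof -
  let ?a = "eta w" and ?v = "gmul w (gen_elt (X0, False))"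
  show ?thesis
  proof (cases "?a \<noteq> [] \<and> last ?a = (X0, True)")
    case True
    then obtain a' where a: "?a = a' @ [(X0, True)]" by (metis append_butlast_last_id)
    have b: "eta ?v = a'" using assms(3) fr_snoc_red[OF assms(2)] True a by simp
    let ?E = "endp id a'"
    have "w = gmul ?E (gen_elt (X0, True))" using assms(1) a by simp
    then have re: "rev_edge (?E, (X0, True)) = (w, (X0, False))" unfolding rev_edge_def by simp
    have "Psi w = path_of id a' @ [(?E, (X0, True))]" unfolding Psi_def a by (simp add: path_of_append)
    then have "Psi w @ [edge_e X0 w] @ rev_path (Psi ?v) =
      path_of id a' @ [(?E, (X0, True)), rev_edge (?E, (X0, True))] @ rev_path (path_of id a')"
      using re b unfolding Psi_def edge_e_def by simp
    then show ?thesis unfolding good_edge_def using null_bt by simp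
  next
    case False
    have b: "eta ?v = ?a @ [(X0, False)]" using assms(3) fr_snoc_red[OF assms(2)] False by auto
    have "Psi ?v = Psi w @ [(w, (X0, False))]" unfolding Psi_def b using assms(1) by (simp add: path_of_append)
    then have "Psi w @ [edge_e X0 w] @ rev_path (Psi ?v) =
      Psi w @ [(w, (X0, False)), rev_edge (w, (X0, False))] @ rev_path (Psi w)"
      unfolding edge_e_def by (simp add: rev_path_append rev_path_def)
    then show ?thesis unfolding good_edge_def using null_bt by simp
  qed
qed

lemma exposed_sup: "i \<in> exposed l \<or> (nleaves l \<le> i \<and> i - nleaves l \<in> exposed r) \<Longrightarrow> i \<in> exposed (Node l r)"
proof (cases "l = Leaf \<and> r = Leaf")
  case True
  assume "i \<in> exposed l \<or> (nleaves l \<le> i \<and> i - nleaves l \<in> exposed r)"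
  then show ?thesis using True by simp
next
  case False
  assume "i \<in> exposed l \<or> (nleaves l \<le> i \<and> i - nleaves l \<in> exposed r)"
  then show ?thesis using mem_exposed_Node[OF False] by blast
qed

lemma ci_expand_last: "contains_interior (expand t (nleaves t - 1)) = contains_interior t"
proof (induction t)
  case Leaf then show ?case by simp
next
  case (Node l r)
  have "\<not> nleaves l + nleaves r - 1 < nleaves l" using nleaves_pos[of r] by simp
  moreover have "nleaves l + nleaves r - 1 - nleaves l = nleaves r - 1" by simp
  ultimately show ?case using Node by simp
qed

lemma gam_expand_last: "p = RootP \<or> p = RightP \<Longrightarrow> gam p (expand t (nleaves t - 1)) = gam p t"
proof (induction t arbitrary: p)
  case Leaf then show ?case by auto
next
  case (Node l r)
  have e: "expand (Node l r) (nleaves (Node l r) - 1) = Node l (expand r (nleaves r - 1))"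
  proof -
    have "\<not> nleaves l + nleaves r - 1 < nleaves l" using nleaves_pos[of r] by simp
    moreover have "nleaves l + nleaves r - 1 - nleaves l = nleaves r - 1" by simp
    ultimately show ?thesis by simp
  qed
  have r: "gam RightP (expand r (nleaves r - 1)) = gam RightP r" using Node.IH(2) by blast
  show ?case using Node.prems unfolding e using r ci_expand_last[of r] by auto
qed

lemma gamL_expand0: "l \<noteq> Leaf \<Longrightarrow> gam LeftP (expand l 0) = (X0, False) # gam LeftP l"
proof (induction l)
  case Leaf then show ?case by simp
next
  case (Node l1 l2)
  have "0 < nleaves l1" by (rule nleaves_pos)
  then have e: "expand (Node l1 l2) 0 = Node (expand l1 0) l2" by simp
  have ne: "expand l1 0 \<noteq> Leaf" using expand_not_Leaf[OF \<open>0 < nleaves l1\<close>] .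
  show ?case
  proof (cases "l1 = Leaf")
    case True then show ?thesis unfolding e by simp
  next
    case False
    then show ?thesis unfolding e using Node.IH(1)[OF False] ne by simp
  qed
qed

lemma gamma_expand0: "S0 \<noteq> Leaf \<Longrightarrow> gamma (expand S0 0) = (X0, False) # gamma S0"
proof -
  assume "S0 \<noteq> Leaf"
  then obtain l r where S0: "S0 = Node l r" by (cases S0) auto
  have "0 < nleaves l" by (rule nleaves_pos)
  then have e: "expand S0 0 = Node (expand l 0) r" using S0 by simp
  have ne: "expand l 0 \<noteq> Leaf" using expand_not_Leaf[OF \<open>0 < nleaves l\<close>] .
  show ?thesis
  proof (cases "l = Leaf")
    case True then show ?thesis unfolding e gamma_def using S0 by simp
  next
    case False
    then show ?thesis unfolding e gamma_def using gamL_expand0[OF False] ne S0 by simp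
  qed
qed

lemma ncarets0: "ncarets T = 0 \<Longrightarrow> T = Leaf" by (cases T) auto

lemma inv_word_app[simp]: "inv_word (u @ v) = inv_word v @ inv_word u"
  by (simp add: inv_word_def)

lemma inv_word_simps[simp]: "inv_word [] = []" "inv_word [x] = [inv_letter x]"
  by (simp_all add: inv_word_def)

definition goodpair :: "tree \<Rightarrow> tree \<Rightarrow> tree \<Rightarrow> tree \<Rightarrow> bool" where
  "goodpair T S T' S' \<longleftrightarrow> reduced_tpd T' S' \<and> tpd_fun T' S' = gmul (tpd_fun T S) (gen_elt (X0,False)) \<and>
     freered (inv_word (gamma S') @ gamma T') = freered (inv_word (gamma S) @ gamma T @ [(X0,False)])"

lemma caseC: "reduced_tpd Leaf S \<Longrightarrow> goodpair Leaf S (Node (Node Leaf Leaf) Leaf) (Node Leaf (Node Leaf Leaf))"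
proof -
  assume "reduced_tpd Leaf S"
  then have S: "S = Leaf" unfolding reduced_tpd_def using ncarets0 by simp
  have "reduced_tpd (Node (Node Leaf Leaf) Leaf) (Node Leaf (Node Leaf Leaf))"
    unfolding reduced_tpd_def by simp
  moreover have "tpd_fun (Node (Node Leaf Leaf) Leaf) (Node Leaf (Node Leaf Leaf)) = gmul (tpd_fun Leaf S) (gen_elt (X0,False))"
    unfolding S gmul_def tpd_self by (simp add: gen_elt_def)
  moreover have "freered (inv_word (gamma (Node Leaf (Node Leaf Leaf))) @ gamma (Node (Node Leaf Leaf) Leaf)) =
      freered (inv_word (gamma S) @ gamma Leaf @ [(X0,False)])"
    unfolding S by (simp add: gamma_def)
  ultimately show ?thesis unfolding goodpair_def by blast
qed

lemma caseB:
  assumes red: "reduced_tpd (Node L Leaf) S" and L: "L \<noteq> Leaf"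
  shows "goodpair (Node L Leaf) S (Node (Node L Leaf) Leaf) (expand S (nleaves L))"
proof -
  let ?T = "Node L Leaf" and ?n = "nleaves L"
  have nS: "nleaves S = Suc ?n" using red unfolding reduced_tpd_def by (simp add: nleaves_ncarets)
  have n: "?n < nleaves ?T" "?n < nleaves S" using nS by simp_all
  have e1: "expand ?T ?n = Node L (Node Leaf Leaf)" by simp
  have t1: "tpd_fun (Node L (Node Leaf Leaf)) (expand S ?n) = tpd_fun ?T S"
    using tpd_expand[OF n(1), of S] nS e1 by simp
  have a: "act (X0, False) (Node L (Node Leaf Leaf)) = Some (Node (Node L Leaf) Leaf)" by simp
  have "nleaves (expand S ?n) = nleaves (Node L (Node Leaf Leaf))" using nleaves_expand[OF n(2)] nS by simp
  then have t2: "gmul (tpd_fun (Node L (Node Leaf Leaf)) (expand S ?n)) (gen_elt (X0, False)) = tpd_fun (Node (Node L Leaf) Leaf) (expand S ?n)"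
    using act_sem[OF a] by simp
  have nc: "ncarets (Node (Node L Leaf) Leaf) = ncarets (expand S ?n)"
    using nleaves_expand[OF n(2)] nS by (simp add: nleaves_ncarets)
  have exT: "i \<in> exposed (Node (Node L Leaf) Leaf) \<longleftrightarrow> i \<in> exposed ?T" for i
    using L mem_exposed_Node[of "Node L Leaf" Leaf i] mem_exposed_Node[of L Leaf i] by simp
  have disj: "exposed (Node (Node L Leaf) Leaf) \<inter> exposed (expand S ?n) = {}"
  proof (rule ccontr)
    assume "exposed (Node (Node L Leaf) Leaf) \<inter> exposed (expand S ?n) \<noteq> {}"
    then obtain i where i: "i \<in> exposed ?T" "i \<in> exposed (expand S ?n)" using exT by blast
    have "i \<in> exposed L" using i(1) L mem_exposed_Node[of L Leaf i] by simp
    then have "Suc i < ?n" using exposed_bound by blast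
    then have "i \<in> exposed S" using exposed_expand_other[OF n(2), of i] i(2) by auto
    then show False using i(1) red unfolding reduced_tpd_def by blast
  qed
  have gS: "gamma (expand S ?n) = gamma S"
    using gam_expand_last[of RootP S] nS unfolding gamma_def by simp
  have gT: "gamma (Node (Node L Leaf) Leaf) = gamma ?T @ [(X0, False)]"
    using L by (simp add: gamma_def)
  show ?thesis unfolding goodpair_def reduced_tpd_def
    using nc disj t1 t2 gS gT by simp
qed

lemma exposed_rot:
  "i \<in> exposed (Node (Node L R1) R2) \<Longrightarrow> i \<in> exposed (Node L (Node R1 R2)) \<or> (i = 0 \<and> L = Leaf \<and> R1 = Leaf)"
proof -
  assume h: "i \<in> exposed (Node (Node L R1) R2)"
  have A: "i \<in> exposed (Node L R1) \<or> (nleaves (Node L R1) \<le> i \<and> i - nleaves (Node L R1) \<in> exposed R2)"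
    using h mem_exposed_Node[of "Node L R1" R2 i] by simp
  show ?thesis
  proof (cases "L = Leaf \<and> R1 = Leaf")
    case True
    then have "i = 0 \<or> (2 \<le> i \<and> i - 2 \<in> exposed R2)" using A by (simp add: numeral_2_eq_2)
    then show ?thesis
    proof
      assume h2: "2 \<le> i \<and> i - 2 \<in> exposed R2"
      obtain k where k: "i = k + 2" using h2 by (metis add.commute le_Suc_ex)
      have q: "i - 1 - nleaves Leaf = i - 2" "nleaves Leaf \<le> i - 1" unfolding k by simp_all
      have "i - 1 \<in> exposed (Node Leaf R2)"
        by (rule exposed_sup, rule disjI2) (use q h2 in simp)
      moreover have "i - nleaves Leaf = i - 1" "nleaves Leaf \<le> i" using h2 by simp_all
      ultimately have "i \<in> exposed (Node Leaf (Node Leaf R2))"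
        by (intro exposed_sup disjI2) simp
      then show ?thesis using True by simp
    qed (use True in simp)
  next
    case False
    have B: "i \<in> exposed L \<or> (nleaves L \<le> i \<and> i - nleaves L \<in> exposed R1) \<or>
        (nleaves L + nleaves R1 \<le> i \<and> i - (nleaves L + nleaves R1) \<in> exposed R2)"
      using A mem_exposed_Node[OF False, of i] by simp
    show ?thesis
    proof -
      have "i \<in> exposed L \<or> (nleaves L \<le> i \<and> i - nleaves L \<in> exposed (Node R1 R2))"
        using B exposed_sup[of "i - nleaves L" R1 R2] by (auto simp: diff_diff_left)
      then show ?thesis using exposed_sup by blast
    qed
  qed
qed

lemma caseA:
  assumes red: "reduced_tpd (Node L (Node R1 R2)) S" and nc: "\<not> (L = Leaf \<and> R1 = Leaf \<and> 0 \<in> exposed S)"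
  shows "goodpair (Node L (Node R1 R2)) S (Node (Node L R1) R2) S"
proof -
  let ?T = "Node L (Node R1 R2)" and ?T' = "Node (Node L R1) R2"
  have nS: "nleaves S = nleaves ?T" using red unfolding reduced_tpd_def by (simp add: nleaves_ncarets)
  have a: "act (X0, False) ?T = Some ?T'" by simp
  have t: "gmul (tpd_fun ?T S) (gen_elt (X0, False)) = tpd_fun ?T' S" using act_sem[OF a nS] .
  have disj: "exposed ?T' \<inter> exposed S = {}"
  proof (rule ccontr)
    assume "exposed ?T' \<inter> exposed S \<noteq> {}"
    then obtain i where i: "i \<in> exposed ?T'" "i \<in> exposed S" by blast
    show False using exposed_rot[OF i(1)] i(2) red nc unfolding reduced_tpd_def by blast
  qed
  have ncT: "ncarets ?T' = ncarets S" using red unfolding reduced_tpd_def by simp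
  define P where "P = gam LeftP L @ (if L = Leaf then [] else [(X0, False)]) @ gam InteriorP R1"
  have gT': "gamma ?T' = P @ [(X0, False)] @ gam RightP R2" unfolding P_def gamma_def by simp
  have w: "freered (inv_word (gamma S) @ gamma ?T') = freered (inv_word (gamma S) @ gamma ?T @ [(X0,False)])"
  proof (cases "contains_interior R2")
    case True
    have gT: "gamma ?T = P @ [(X0, False)] @ gam RightP R2 @ [(X0, True)]"
      unfolding P_def gamma_def using True by simp
    have "freered (inv_word (gamma S) @ gamma ?T @ [(X0,False)]) =
        freered ((inv_word (gamma S) @ P @ [(X0, False)] @ gam RightP R2) @ (X0, True) # inv_letter (X0, True) # [])"
      unfolding gT by simp
    also have "\<dots> = freered (inv_word (gamma S) @ P @ [(X0, False)] @ gam RightP R2)"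
      by (simp only: fr_cancel_mid append_Nil2)
    finally show ?thesis unfolding gT' by simp
  next
    case False
    then have "gam RightP R2 = []" using ci_vine by blast
    moreover have "gamma ?T = P @ gam RightP R2" unfolding P_def gamma_def using False by simp
    ultimately show ?thesis using gT' by simp
  qed
  show ?thesis unfolding goodpair_def reduced_tpd_def using disj ncT t w by simp
qed

lemma ncarets2: "ncarets S0 = 1 \<Longrightarrow> S0 = Node Leaf Leaf"
  by (cases S0) (auto dest: ncarets0)

lemma caseA2:
  assumes red: "reduced_tpd (Node Leaf (Node Leaf Leaf)) S" and e: "0 \<in> exposed S"
  shows "goodpair (Node Leaf (Node Leaf Leaf)) S Leaf Leaf"
proof -
  obtain S0 where S0: "0 < nleaves S0" "S = expand S0 0" using exposed_preimage[OF e] by blast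
  have "nleaves S = 3" using red unfolding reduced_tpd_def by (simp add: nleaves_ncarets)
  then have "nleaves S0 = 2" using nleaves_expand[OF S0(1)] S0 by simp
  then have "ncarets S0 = 1" by (simp add: nleaves_ncarets)
  then have "S0 = Node Leaf Leaf" by (rule ncarets2)
  then have S: "S = Node (Node Leaf Leaf) Leaf" using S0 by simp
  have "tpd_fun Leaf Leaf = gmul (tpd_fun (Node Leaf (Node Leaf Leaf)) S) (gen_elt (X0,False))"
    unfolding S gmul_def
    using tpd_compose[of "Node (Node Leaf Leaf) Leaf" "Node Leaf (Node Leaf Leaf)" "Node (Node Leaf Leaf) Leaf"]
    by (simp add: gen_elt_def tpd_self)
  moreover have "reduced_tpd Leaf Leaf" unfolding reduced_tpd_def by simp
  moreover have "freered (inv_word (gamma Leaf) @ gamma Leaf) =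
     freered (inv_word (gamma S) @ gamma (Node Leaf (Node Leaf Leaf)) @ [(X0,False)])"
    unfolding S by (simp add: gamma_def)
  ultimately show ?thesis unfolding goodpair_def by simp
qed

lemma inv_word_Cons[simp]: "inv_word (x # u) = inv_word u @ [inv_letter x]"
  by (simp add: inv_word_def)

lemma caseA1:
  assumes red: "reduced_tpd (Node Leaf (Node Leaf R2)) S" and e: "0 \<in> exposed S" and R2: "R2 \<noteq> Leaf"
  shows "\<exists>S0. goodpair (Node Leaf (Node Leaf R2)) S (Node Leaf R2) S0"
proof -
  let ?T = "Node Leaf (Node Leaf R2)" and ?Tz = "Node Leaf R2"
  obtain S0 where S0: "0 < nleaves S0" "S = expand S0 0" using exposed_preimage[OF e] by blast
  have "ncarets ?T = ncarets S" using red unfolding reduced_tpd_def by (rule conjunct1)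
  then have nS: "nleaves S = nleaves ?T" using nleaves_ncarets[of S] nleaves_ncarets[of ?T] by linarith
  have nS0: "nleaves S0 = nleaves ?Tz"
  proof -
    have "nleaves (expand S0 0) = Suc (nleaves S0)" by (rule nleaves_expand[OF S0(1)])
    moreover have "nleaves ?T = Suc (nleaves ?Tz)" by simp
    ultimately show ?thesis using nS S0(2) by simp
  qed
  have eT0: "expand ?Tz 0 = Node (Node Leaf Leaf) R2" by simp
  have a: "act (X0, False) ?T = Some (Node (Node Leaf Leaf) R2)" by simp
  have t: "tpd_fun ?Tz S0 = gmul (tpd_fun ?T S) (gen_elt (X0, False))"
  proof -
    have "tpd_fun (expand ?Tz 0) (expand S0 0) = tpd_fun ?Tz S0"
      by (rule tpd_expand) (use nS0 in simp_all)
    moreover have "tpd_fun (expand ?Tz 0) (expand S0 0) = tpd_fun (Node (Node Leaf Leaf) R2) S"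
      by (simp only: eT0 S0(2))
    moreover have "tpd_fun (Node (Node Leaf Leaf) R2) S = gmul (tpd_fun ?T S) (gen_elt (X0, False))"
      by (rule act_sem[OF a nS, symmetric])
    ultimately show ?thesis by simp
  qed
  have nc: "ncarets ?Tz = ncarets S0" using nS0 nleaves_ncarets[of S0] nleaves_ncarets[of ?Tz] by linarith
  have disj: "exposed ?Tz \<inter> exposed S0 = {}"
  proof (rule ccontr)
    assume "exposed ?Tz \<inter> exposed S0 \<noteq> {}"
    then obtain i where i: "i \<in> exposed ?Tz" "i \<in> exposed S0" by blast
    have "i \<in> exposed Leaf \<or> (nleaves Leaf \<le> i \<and> i - nleaves Leaf \<in> exposed R2)"
      using i(1) mem_exposed_Node[of Leaf R2 i] R2 by blast
    then have i1: "1 \<le> i" "i - 1 \<in> exposed R2" by auto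
    have eq: "Suc i - nleaves Leaf = i" "nleaves Leaf \<le> Suc i" by simp_all
    have "Suc i - nleaves Leaf \<in> exposed ?Tz" unfolding eq(1) by (rule i(1))
    then have "Suc i \<in> exposed ?T" using eq(2) exposed_sup[of "Suc i" Leaf ?Tz] by blast
    moreover have "Suc i \<in> exposed (expand S0 0)"
    proof -
      have "Suc 0 < Suc i \<and> Suc i - 1 \<in> exposed S0" using i1 i(2) by simp
      then show ?thesis using exposed_expand_other[OF S0(1), of "Suc i"] by blast
    qed
    moreover have "exposed ?T \<inter> exposed S = {}" using red unfolding reduced_tpd_def by (rule conjunct2)
    ultimately show False using S0(2) by blast
  qed
  have S0L: "S0 \<noteq> Leaf" using nS0 R2 nleaves_pos[of R2] by (cases R2) auto
  have gS: "gamma S = (X0, False) # gamma S0" using gamma_expand0[OF S0L] S0 by simp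
  have gT0: "gamma ?Tz = gam RightP R2" by (simp add: gamma_def)
  have w: "freered (inv_word (gamma S0) @ gamma ?Tz) = freered (inv_word (gamma S) @ gamma ?T @ [(X0,False)])"
  proof (cases "contains_interior R2")
    case True
    have gT: "gamma ?T = [(X0, False)] @ gam RightP R2 @ [(X0, True)]" using True by (simp add: gamma_def)
    have "inv_word (gamma S) @ gamma ?T @ [(X0,False)] =
      inv_word (gamma S0) @ (X0, True) # inv_letter (X0, True) # (gam RightP R2 @ (X0, True) # inv_letter (X0, True) # [])"
      unfolding gS gT by simp
    then have "freered (inv_word (gamma S) @ gamma ?T @ [(X0,False)]) = freered (inv_word (gamma S0) @ gam RightP R2)"
      by (simp only: fr_cancel_mid append_Nil2 append_assoc[symmetric])
    then show ?thesis unfolding gT0 by simp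
  next
    case False
    then have g: "gam RightP R2 = []" using ci_vine by blast
    have gT: "gamma ?T = []" using False g by (simp add: gamma_def)
    have "inv_word (gamma S) @ gamma ?T @ [(X0,False)] = inv_word (gamma S0) @ (X0, True) # inv_letter (X0, True) # []"
      unfolding gS gT by simp
    then have "freered (inv_word (gamma S) @ gamma ?T @ [(X0,False)]) = freered (inv_word (gamma S0) @ [])"
      by (simp only: fr_cancel_mid)
    then show ?thesis unfolding gT0 g by simp
  qed
  show ?thesis unfolding goodpair_def reduced_tpd_def
    by (rule exI[of _ S0], intro conjI, fact+)
qed

lemma main_words: "reduced_tpd T S \<Longrightarrow> \<exists>T' S'. goodpair T S T' S'"
proof -
  assume red: "reduced_tpd T S"
  show ?thesis
  proof (cases T)
    case Leaf then show ?thesis using caseC red by blast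
  next
    case (Node L R)
    show ?thesis
    proof (cases R)
      case Leaf
      have "L \<noteq> Leaf"
      proof
        assume "L = Leaf"
        then have "T = Node Leaf Leaf" using Node Leaf by simp
        then have "ncarets S = 1" using red unfolding reduced_tpd_def by simp
        then have "S = Node Leaf Leaf" by (rule ncarets2)
        then show False using red \<open>T = Node Leaf Leaf\<close> unfolding reduced_tpd_def by simp
      qed
      then show ?thesis using caseB red Node Leaf by blast
    next
      case (Node R1 R2)
      show ?thesis
      proof (cases "L = Leaf \<and> R1 = Leaf \<and> 0 \<in> exposed S")
        case False
        then show ?thesis using caseA red \<open>T = Node L R\<close> Node by blast
      next
        case True
        show ?thesis
        proof (cases "R2 = Leaf")
          case True
          then show ?thesis using caseA2 red \<open>T = Node L R\<close> Node \<open>L = Leaf \<and> R1 = Leaf \<and> 0 \<in> exposed S\<close> by blast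
        next
          case False
          then show ?thesis using caseA1 red \<open>T = Node L R\<close> Node \<open>L = Leaf \<and> R1 = Leaf \<and> 0 \<in> exposed S\<close> by blast
        qed
      qed
    qed
  qed
qed

theorem lemma4p4:
  assumes "w \<in> thompsonF"
  shows "good_edge X0 w"
proof -
  obtain T S where TS: "reduced_tpd T S" "w = tpd_fun T S" using thompson_rep[OF assms] by blast
  have r: "rtpd w = (T, S)" using rtpd_eq[OF TS(1)] TS(2) by simp
  have ew: "eta w = freered (inv_word (gamma S) @ gamma T)"
    unfolding eta_def Tminus_def Tplus_def r by simp
  have ncTS: "ncarets T = ncarets S" using TS(1) unfolding reduced_tpd_def by (rule conjunct1)
  have "endp id (eta w) = tpd_fun T S" unfolding ew by (rule eta_sem[OF ncTS])
  then have e1: "endp id (eta w) = w" using TS(2) by simp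
  have e2: "redw (eta w)" unfolding ew by (rule redw_freered)
  obtain T' S' where g: "goodpair T S T' S'" using main_words[OF TS(1)] by blast
  let ?v = "gmul w (gen_elt (X0, False))"
  have g': "reduced_tpd T' S' \<and> tpd_fun T' S' = ?v \<and>
     freered (inv_word (gamma S') @ gamma T') = freered (inv_word (gamma S) @ gamma T @ [(X0,False)])"
    using g TS(2) by (simp only: goodpair_def)
  have r': "rtpd ?v = (T', S')" using rtpd_eq[OF conjunct1[OF g']] conjunct1[OF conjunct2[OF g']] by simp
  have "eta ?v = freered (inv_word (gamma S') @ gamma T')"
    unfolding eta_def Tminus_def Tplus_def r' by simp
  also have "\<dots> = freered (inv_word (gamma S) @ gamma T @ [(X0,False)])" using conjunct2[OF conjunct2[OF g']] .
  also have "\<dots> = freered (eta w @ [(X0,False)])" unfolding ew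
    using fr_app_left[of "inv_word (gamma S) @ gamma T" "[(X0,False)]"] by simp
  finally have e3: "eta ?v = freered (eta w @ [(X0, False)])" .
  show ?thesis by (rule good_from_words[OF e1 e2 e3])
qed

end
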